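(* Let $R$ be a triad hexagon with focal points $A$ (top), $B$ (bottom left), $C$ (bottom right), with bowties of types $(a,a')$ at $A$, $(b,b')$ at $B$, $(c,c')$ at $C$. Define its S-depth, NE-depth and NW-depth to be $$\delta(BC,S)-b-c,\qquad \delta(AC,NE)-a-c,\qquad \delta(AB,NW)-a-b,$$ respectively. Then: (a) $R$ is tileable (admits at least one lozenge tiling) if and only if its S-depth, NE-depth and NW-depth are all non-negative. (b) The S-depth, NE-depth and NW-depth of a triad hexagon are unchanged by any bowtie squeezing operation. (c) If $R$ is tileable, then every triad hexagon obtained from $R$ by a finite sequence of bowtie squeezings is also tileable.
   Context: Work on the triangular lattice, drawn with one family of lattice lines horizontal; unit triangles are up-pointing or down-pointing. A lozenge is the union of two unit triangles sharing an edge. Lengths of lattice segments are measured in unit-triangle side lengths; distances from a point or a segment to a lattice line parallel to it (or to a side of a hexagon) are measured in lattice spacings (the distance between consecutive parallel lattice lines counts as 1). The sides of a lattice hexagon with horizontal top and bottom are called N, NE, SE, S, SW, NW (clockwise from the top); $\delta(P,N)$ denotes the distance from a point or segment $P$ to the line containing the N side, and similarly for the other sides. Triad hexagons. Let $x,y,z,a,b,c,a',b',c'$ be non-negative integers. Let $A,B,C$ be lattice points forming an up-pointing equilateral lattice triangle of side $f$ ($A$ the top vertex, $B$ the bottom-left, $C$ the bottom-right), with $f\ge a'+b'+c'$; $f$ is the focal distance, $A,B,C$ the focal points, $AB,AC,BC$ the focal edges. The $(a,a')$-bowtie at $A$ is the union of the down-pointing lattice triangle of side $a$ with bottom vertex $A$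 and the up-pointing lattice triangle of side $a'$ with top vertex $A$. The $(b,b')$-bowtie at $B$ is the union of the up-pointing triangle of side $b'$ with bottom-left vertex $B$ and the down-pointing triangle of side $b$ with top-right vertex $B$. The $(c,c')$-bowtie at $C$ is the union of the up-pointing triangle of side $c'$ with bottom-right vertex $C$ and the down-pointing triangle of side $c$ with top-left vertex $C$. (Triangles of side $0$ are empty; the lobes of sides $a',b',c'$ are called inner lobes, those of sides $a,b,c$ outer lobes.) Let $H$ be a lattice hexagon with side lengths N: $x+a+b+c$, NE: $y+a'+b'+c'$, SE: $z+a+b+c$, S: $x+a'+b'+c'$, SW: $y+a+b+c$, NW: $z+a'+b'+c'$, containing the three bowties. The triad hexagon $R^{A,B,C}_{x,y,z}(a,b,c,a',b',c')$ is $H$ with the three bowties removed. Bowtie squeezing. Squeezing out the bowtie at $A$ by $d$ units ($0\le d\le a'$): keep $A$ fixed and replace the $(a,a')$-bowtie by an $(a+d,a'-d)$-bowtie; translate the bowtie at $B$ by $d$ units in the direction of $\overrightarrow{BA}$ and the bowtie at $C$ by $d$ units in the direction of $\overrightarrow{CA}$ (so the focal distance becomes $f-d$); translate the N, NW, NE sides of the hexagon outward by $d$ lattice spacings and the S, SW, SE sides inward by $d$ lattice spacings. Squeezing out the bowtie at $B$ by $d\le b'$ is defined symmetrically: $B$ fixed, $(b,b')\to(b+d,b'-d)$, bowties at $A$ and $C$ translated $d$ units in the directions $\overrightarrow{AB}$, $\overrightarrow{CB}$, sides SW, NW, S moved outward and NE, N, SE moved inward by $d$ lattice spacings. Squeezing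 out the bowtie at $C$ by $d\le c'$: $C$ fixed, $(c,c')\to(c+d,c'-d)$, bowties at $A$ and $B$ translated $d$ units in the directions $\overrightarrow{AC}$, $\overrightarrow{BC}$, sides SE, NE, S moved outward and NW, N, SW moved inward by $d$ lattice spacings. Squeezing in a bowtie by $d$ units (with $d$ at most the size of its outer lobe) is the inverse operation. Each of these operations produces again a triad hexagon (with the same $x,y,z$). A bowtie squeezing means any of these operations. *)

theory Defs
  imports Main
begin

text \<open>Lattice points are pairs (i,j) of integers standing for the point i*e1 + j*e2,
  where e1 = (1,0) and e2 = (1/2, sqrt 3/2).  The three families of lattice lines are
  j = const (horizontal), i = const (direction e2) and i+j = const (direction e2-e1);
  consecutive lines of each family are one lattice spacing apart.\<close>

datatype tri = Up int int | Dn int int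

fun tverts :: "tri \<Rightarrow> (int \<times> int) set" where
  "tverts (Up i j) = {(i,j), (i+1,j), (i,j+1)}"
| "tverts (Dn i j) = {(i+1,j), (i,j+1), (i+1,j+1)}"

text \<open>A lozenge: two unit triangles sharing an edge.  The up triangle Up i j shares an
  edge exactly with Dn i j, Dn (i-1) j and Dn i (j-1).\<close>

definition is_lozenge :: "tri set \<Rightarrow> bool" where
  "is_lozenge L \<longleftrightarrow> (\<exists>i j. L = {Up i j, Dn i j} \<or> L = {Up i j, Dn (i-1) j} \<or> L = {Up i j, Dn i (j-1)})"

definition lozenge_tiling :: "tri set set \<Rightarrow> tri set \<Rightarrow> bool" where
  "lozenge_tiling \<L> R \<longleftrightarrow>
     (\<forall>L\<in>\<L>. is_lozenge L) \<and>
     (\<forall>L1\<in>\<L>. \<forall>L2\<in>\<L>. L1 \<noteq> L2 \<longrightarrow> L1 \<inter> L2 = {}) \<and>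
     \<Union>\<L> = R"

definition tileable :: "tri set \<Rightarrow> bool" where
  "tileable R \<longleftrightarrow> (\<exists>\<L>. lozenge_tiling \<L> R)"

definition tris_in :: "(int \<times> int) set \<Rightarrow> tri set" where
  "tris_in P = {t. tverts t \<subseteq> P}"

text \<open>Lattice points of the closed up-pointing triangle of side s with bottom-left vertex (p,q),
  and of the closed down-pointing triangle of side s with top-right vertex (p,q).
  (Side 0 gives a single point, containing no unit triangle.)\<close>
definition up_pts :: "int \<Rightarrow> int \<Rightarrow> nat \<Rightarrow> (int \<times> int) set" where
  "up_pts p q s = {(i,j). p \<le> i \<and> q \<le> j \<and> i + j \<le> p + q + int s}"

definition dn_pts :: "int \<Rightarrow> int \<Rightarrow> nat \<Rightarrow> (int \<times> int) set" where
  "dn_pts p q s = {(i,j). i \<le> p \<and> j \<le> q \<and> p + q - int s \<le> i + j}"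

text \<open>The focal point A is (tpA, tqA); tf is the focal distance, so B = A - tf*e2 and
  C = B + tf*e1.  The hexagon H is
  {(i,j). hi0 \<le> i \<le> hi1, hj0 \<le> j \<le> hj1, hk0 \<le> i+j \<le> hk1}:
  N side on j = hj1, S side on j = hj0, NE side on i+j = hk1, SW side on i+j = hk0,
  SE side on i = hi1, NW side on i = hi0.\<close>

record triad =
  tx :: nat
  ty :: nat
  tz :: nat
  ta :: nat
  tb :: nat
  tc :: nat
  ta' :: nat
  tb' :: nat
  tc' :: nat
  tf :: nat
  tpA :: int
  tqA :: int
  hi0 :: int
  hi1 :: int
  hj0 :: int
  hj1 :: int
  hk0 :: int
  hk1 :: int

definition ptA :: "triad \<Rightarrow> int \<times> int" where
  "ptA T = (tpA T, tqA T)"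
definition ptB :: "triad \<Rightarrow> int \<times> int" where
  "ptB T = (tpA T, tqA T - int (tf T))"
definition ptC :: "triad \<Rightarrow> int \<times> int" where
  "ptC T = (tpA T + int (tf T), tqA T - int (tf T))"

definition hex_pts :: "triad \<Rightarrow> (int \<times> int) set" where
  "hex_pts T = {(i,j). hi0 T \<le> i \<and> i \<le> hi1 T \<and> hj0 T \<le> j \<and> j \<le> hj1 T
                     \<and> hk0 T \<le> i + j \<and> i + j \<le> hk1 T}"

definition lenN :: "triad \<Rightarrow> int" where "lenN T = hk1 T - hj1 T - hi0 T"
definition lenNE :: "triad \<Rightarrow> int" where "lenNE T = hj1 T + hi1 T - hk1 T"
definition lenSE :: "triad \<Rightarrow> int" where "lenSE T = hk1 T - hi1 T - hj0 T"
definition lenS :: "triad \<Rightarrow> int" where "lenS T = hi1 T - hk0 T + hj0 T"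
definition lenSW :: "triad \<Rightarrow> int" where "lenSW T = hk0 T - hi0 T - hj0 T"
definition lenNW :: "triad \<Rightarrow> int" where "lenNW T = hj1 T - hk0 T + hi0 T"

definition lobeA_out :: "triad \<Rightarrow> (int \<times> int) set" where
  "lobeA_out T = dn_pts (tpA T) (tqA T + int (ta T)) (ta T)"   \<comment> \<open>bottom vertex A\<close>
definition lobeA_in :: "triad \<Rightarrow> (int \<times> int) set" where
  "lobeA_in T = up_pts (tpA T) (tqA T - int (ta' T)) (ta' T)"  \<comment> \<open>top vertex A\<close>
definition lobeB_in :: "triad \<Rightarrow> (int \<times> int) set" where
  "lobeB_in T = up_pts (fst (ptB T)) (snd (ptB T)) (tb' T)"     \<comment> \<open>bottom-left vertex B\<close>
definition lobeB_out :: "triad \<Rightarrow> (int \<times> int) set" where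
  "lobeB_out T = dn_pts (fst (ptB T)) (snd (ptB T)) (tb T)"     \<comment> \<open>top-right vertex B\<close>
definition lobeC_in :: "triad \<Rightarrow> (int \<times> int) set" where
  "lobeC_in T = up_pts (fst (ptC T) - int (tc' T)) (snd (ptC T)) (tc' T)"  \<comment> \<open>bottom-right vertex C\<close>
definition lobeC_out :: "triad \<Rightarrow> (int \<times> int) set" where
  "lobeC_out T = dn_pts (fst (ptC T) + int (tc T)) (snd (ptC T)) (tc T)"   \<comment> \<open>top-left vertex C\<close>

definition is_triad :: "triad \<Rightarrow> bool" where
  "is_triad T \<longleftrightarrow>
     ta' T + tb' T + tc' T \<le> tf T \<and>
     lenN T = int (tx T + ta T + tb T + tc T) \<and>
     lenNE T = int (ty T + ta' T + tb' T + tc' T) \<and>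
     lenSE T = int (tz T + ta T + tb T + tc T) \<and>
     lenS T = int (tx T + ta' T + tb' T + tc' T) \<and>
     lenSW T = int (ty T + ta T + tb T + tc T) \<and>
     lenNW T = int (tz T + ta' T + tb' T + tc' T) \<and>
     lobeA_out T \<union> lobeA_in T \<union> lobeB_in T \<union> lobeB_out T \<union> lobeC_in T \<union> lobeC_out T
       \<subseteq> hex_pts T"

definition triad_region :: "triad \<Rightarrow> tri set" where
  "triad_region T = tris_in (hex_pts T) -
     (tris_in (lobeA_out T) \<union> tris_in (lobeA_in T) \<union> tris_in (lobeB_in T) \<union>
      tris_in (lobeB_out T) \<union> tris_in (lobeC_in T) \<union> tris_in (lobeC_out T))"

text \<open>delta(BC,S) = (height of BC) - hj0; delta(AC,NE) = hk1 - (i+j on AC);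
  delta(AB,NW) = (i on AB) - hi0.\<close>
definition S_depth :: "triad \<Rightarrow> int" where
  "S_depth T = (snd (ptB T) - hj0 T) - int (tb T) - int (tc T)"
definition NE_depth :: "triad \<Rightarrow> int" where
  "NE_depth T = (hk1 T - (fst (ptA T) + snd (ptA T))) - int (ta T) - int (tc T)"
definition NW_depth :: "triad \<Rightarrow> int" where
  "NW_depth T = (fst (ptA T) - hi0 T) - int (ta T) - int (tb T)"

definition squeeze_out_A :: "nat \<Rightarrow> triad \<Rightarrow> triad" where
  "squeeze_out_A d T = T\<lparr> ta := ta T + d, ta' := ta' T - d, tf := tf T - d,
      hj1 := hj1 T + int d, hi0 := hi0 T - int d, hk1 := hk1 T + int d,
      hj0 := hj0 T + int d, hk0 := hk0 T + int d, hi1 := hi1 T - int d \<rparr>"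

definition squeeze_out_B :: "nat \<Rightarrow> triad \<Rightarrow> triad" where
  "squeeze_out_B d T = T\<lparr> tb := tb T + d, tb' := tb' T - d, tf := tf T - d,
      tqA := tqA T - int d,
      hk0 := hk0 T - int d, hi0 := hi0 T - int d, hj0 := hj0 T - int d,
      hk1 := hk1 T - int d, hj1 := hj1 T - int d, hi1 := hi1 T - int d \<rparr>"

definition squeeze_out_C :: "nat \<Rightarrow> triad \<Rightarrow> triad" where
  "squeeze_out_C d T = T\<lparr> tc := tc T + d, tc' := tc' T - d, tf := tf T - d,
      tpA := tpA T + int d, tqA := tqA T - int d,
      hi1 := hi1 T + int d, hk1 := hk1 T + int d, hj0 := hj0 T - int d,
      hi0 := hi0 T + int d, hj1 := hj1 T - int d, hk0 := hk0 T + int d \<rparr>"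

definition squeeze_step :: "triad \<Rightarrow> triad \<Rightarrow> bool" where
  "squeeze_step T T' \<longleftrightarrow> is_triad T \<and> is_triad T' \<and>
     (\<exists>d. (d \<le> ta' T \<and> T' = squeeze_out_A d T) \<or>
          (d \<le> tb' T \<and> T' = squeeze_out_B d T) \<or>
          (d \<le> tc' T \<and> T' = squeeze_out_C d T) \<or>
          (d \<le> ta' T' \<and> T = squeeze_out_A d T') \<or>
          (d \<le> tb' T' \<and> T = squeeze_out_B d T') \<or>
          (d \<le> tc' T' \<and> T = squeeze_out_C d T'))"

end

theory Submission
  imports Defs
begin

definition part :: "int \<Rightarrow> int \<Rightarrow> int \<Rightarrow> tri" where
  "part d i j = (if d = 0 then Dn i (j-1) else if d = 1 then Dn (i-1) j else Dn i j)"

lemma tileable_dir: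
  fixes R :: "tri set" and D :: "int \<Rightarrow> int \<Rightarrow> int"
  assumes V0: "\<And>i j. Up i j \<in> R \<Longrightarrow> D i j = 0 \<or> D i j = 1 \<or> D i j = 2"
  and V1: "\<And>i j. Up i j \<in> R \<Longrightarrow> part (D i j) i j \<in> R"
  and V2a: "\<And>i j. \<not> ((Up i j \<in> R \<and> D i j = 2) \<and> (Up (i+1) j \<in> R \<and> D (i+1) j = 1))"
  and V2b: "\<And>i j. \<not> ((Up i j \<in> R \<and> D i j = 2) \<and> (Up i (j+1) \<in> R \<and> D i (j+1) = 0))"
  and V2c: "\<And>i j. \<not> ((Up (i+1) j \<in> R \<and> D (i+1) j = 1) \<and> (Up i (j+1) \<in> R \<and> D i (j+1) = 0))"
  and V3: "\<And>i j. Dn i j \<in> R \<Longrightarrow> (Up i j \<in> R \<and> D i j = 2) \<or> (Up (i+1) j \<in> R \<and> D (i+1) j = 1) \<or> (Up i (j+1) \<in> R \<and> D i (j+1) = 0)"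
  shows "tileable R"
proof -
  define Ls where "Ls = (\<lambda>(i,j). {Up i j, part (D i j) i j}) ` {(i,j). Up i j \<in> R}"
  have claim: "part (D i j) i j = Dn k l \<longleftrightarrow>
      (D i j = 0 \<and> k = i \<and> l = j - 1) \<or> (D i j = 1 \<and> k = i - 1 \<and> l = j) \<or> (D i j \<noteq> 0 \<and> D i j \<noteq> 1 \<and> k = i \<and> l = j)"
    for i j k l by (auto simp: part_def)
  have pdn: "\<exists>k l. part (D i j) i j = Dn k l" for i j by (auto simp: part_def)
  have inj: "i = i' \<and> j = j'" if "Up i j \<in> R" "Up i' j' \<in> R" "part (D i j) i j = part (D i' j') i' j'" for i j i' j'
  proof -
    obtain k l where kl: "part (D i j) i j = Dn k l" using pdn by blast
    hence kl': "part (D i' j') i' j' = Dn k l" using that(3) by simp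
    have c1: "(D i j = 0 \<and> k = i \<and> l = j - 1) \<or> (D i j = 1 \<and> k = i - 1 \<and> l = j) \<or> (D i j = 2 \<and> k = i \<and> l = j)"
      using kl claim V0[OF that(1)] by auto
    have c2: "(D i' j' = 0 \<and> k = i' \<and> l = j' - 1) \<or> (D i' j' = 1 \<and> k = i' - 1 \<and> l = j') \<or> (D i' j' = 2 \<and> k = i' \<and> l = j')"
      using kl' claim V0[OF that(2)] by auto
    show ?thesis
    proof (rule ccontr)
      assume ne: "\<not> (i = i' \<and> j = j')"
      from c1 c2 ne show False
        using V2a[of k l] V2b[of k l] V2c[of k l] that(1,2)
        by (auto simp: algebra_simps)
    qed
  qed
  have "lozenge_tiling Ls R"
    unfolding lozenge_tiling_def
  proof (intro conjI ballI impI)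
    fix L assume "L \<in> Ls"
    then obtain i j where L: "L = {Up i j, part (D i j) i j}" by (auto simp: Ls_def)
    have "L = {Up i j, Dn i j} \<or> L = {Up i j, Dn (i-1) j} \<or> L = {Up i j, Dn i (j-1)}"
      by (auto simp: L part_def)
    thus "is_lozenge L" unfolding is_lozenge_def by blast
  next
    fix L1 L2 assume "L1 \<in> Ls" "L2 \<in> Ls" "L1 \<noteq> L2"
    then obtain i j i' j' where L1: "L1 = {Up i j, part (D i j) i j}" "Up i j \<in> R"
      and L2: "L2 = {Up i' j', part (D i' j') i' j'}" "Up i' j' \<in> R" by (auto simp: Ls_def)
    have ne: "\<not> (i = i' \<and> j = j')" using L1 L2 \<open>L1 \<noteq> L2\<close> by auto
    have "part (D i j) i j \<noteq> part (D i' j') i' j'" using inj[OF L1(2) L2(2)] ne by blast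
    moreover have "Up i j \<noteq> part (D i' j') i' j'" "Up i' j' \<noteq> part (D i j) i j" by (auto simp: part_def)
    ultimately show "L1 \<inter> L2 = {}" using L1 L2 ne by auto
  next
    show "\<Union> Ls = R"
    proof
      show "\<Union> Ls \<subseteq> R" using V1 by (auto simp: Ls_def)
    next
      show "R \<subseteq> \<Union> Ls"
      proof
        fix t assume t: "t \<in> R"
        show "t \<in> \<Union> Ls"
        proof (cases t)
          case (Up i j) thus ?thesis using t by (auto simp: Ls_def)
        next
          case (Dn i j)
          from V3[of i j] t Dn have
            "(Up i j \<in> R \<and> D i j = 2) \<or> (Up (i+1) j \<in> R \<and> D (i+1) j = 1) \<or> (Up i (j+1) \<in> R \<and> D i (j+1) = 0)" by simp
          then show ?thesis
          proof (elim disjE)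
            assume h: "Up i j \<in> R \<and> D i j = 2"
            hence "{Up i j, part (D i j) i j} \<in> Ls" by (auto simp: Ls_def)
            moreover have "t \<in> {Up i j, part (D i j) i j}" using h Dn by (simp add: part_def)
            ultimately show ?thesis by blast
          next
            assume h: "Up (i+1) j \<in> R \<and> D (i+1) j = 1"
            hence "{Up (i+1) j, part (D (i+1) j) (i+1) j} \<in> Ls" by (auto simp: Ls_def)
            moreover have "t \<in> {Up (i+1) j, part (D (i+1) j) (i+1) j}" using h Dn by (simp add: part_def)
            ultimately show ?thesis by blast
          next
            assume h: "Up i (j+1) \<in> R \<and> D i (j+1) = 0"
            hence "{Up i (j+1), part (D i (j+1)) i (j+1)} \<in> Ls" by (auto simp: Ls_def)
            moreover have "t \<in> {Up i (j+1), part (D i (j+1)) i (j+1)}" using h Dn by (simp add: part_def)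
            ultimately show ?thesis by blast
          qed
        qed
      qed
    qed
  qed
  thus ?thesis unfolding tileable_def by blast
qed

lemma tileable_union:
  assumes "tileable R1" "tileable R2" "R1 \<inter> R2 = {}"
  shows "tileable (R1 \<union> R2)"
proof -
  obtain L1 L2 where t1: "lozenge_tiling L1 R1" and t2: "lozenge_tiling L2 R2"
    using assms(1,2) unfolding tileable_def by blast
  have "lozenge_tiling (L1 \<union> L2) (R1 \<union> R2)"
    unfolding lozenge_tiling_def
  proof (intro conjI ballI impI)
    fix L assume "L \<in> L1 \<union> L2" thus "is_lozenge L" using t1 t2 by (auto simp: lozenge_tiling_def)
  next
    fix A B assume A: "A \<in> L1 \<union> L2" and B: "B \<in> L1 \<union> L2" and "A \<noteq> B"
    have s1: "X \<subseteq> R1" if "X \<in> L1" for X using t1 that by (auto simp: lozenge_tiling_def)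
    have s2: "X \<subseteq> R2" if "X \<in> L2" for X using t2 that by (auto simp: lozenge_tiling_def)
    show "A \<inter> B = {}"
    proof (cases "A \<in> L1")
      case True
      show ?thesis
      proof (cases "B \<in> L1")
        case True thus ?thesis using \<open>A \<in> L1\<close> \<open>A \<noteq> B\<close> t1 by (auto simp: lozenge_tiling_def)
      next
        case False hence "B \<in> L2" using B by auto
        thus ?thesis using s1[OF \<open>A \<in> L1\<close>] s2 assms(3) by blast
      qed
    next
      case False hence A2: "A \<in> L2" using A by auto
      show ?thesis
      proof (cases "B \<in> L2")
        case True thus ?thesis using A2 \<open>A \<noteq> B\<close> t2 by (auto simp: lozenge_tiling_def)
      next
        case False hence "B \<in> L1" using B by auto
        thus ?thesis using s2[OF A2] s1 assms(3) by blast
      qed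
    qed
  next
    show "\<Union> (L1 \<union> L2) = R1 \<union> R2" using t1 t2 by (auto simp: lozenge_tiling_def)
  qed
  thus ?thesis unfolding tileable_def by blast
qed

lemma up_tris_in: "Up i j \<in> tris_in P \<longleftrightarrow> (i,j) \<in> P \<and> (i+1,j) \<in> P \<and> (i,j+1) \<in> P"
  by (simp add: tris_in_def)
lemma dn_tris_in: "Dn i j \<in> tris_in P \<longleftrightarrow> (i+1,j) \<in> P \<and> (i,j+1) \<in> P \<and> (i+1,j+1) \<in> P"
  by (simp add: tris_in_def)

lemmas mem_simps = triad_region_def up_tris_in dn_tris_in hex_pts_def lobeA_out_def lobeA_in_def
  lobeB_in_def lobeB_out_def lobeC_in_def lobeC_out_def up_pts_def dn_pts_def ptB_def ptC_def ptA_def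

definition inhex :: "triad \<Rightarrow> int \<Rightarrow> int \<Rightarrow> bool" where
  "inhex T i j \<longleftrightarrow> hi0 T \<le> i \<and> i \<le> hi1 T \<and> hj0 T \<le> j \<and> j \<le> hj1 T \<and> hk0 T \<le> i + j \<and> i + j \<le> hk1 T"

lemma inhex_iff: "(i, j) \<in> hex_pts T \<longleftrightarrow> inhex T i j" by (simp add: hex_pts_def inhex_def)

definition triad_lin :: "triad \<Rightarrow> bool" where
 "triad_lin T \<longleftrightarrow> int (ta' T) + int (tb' T) + int (tc' T) \<le> int (tf T) \<and>
     hk1 T - hj1 T - hi0 T = int (tx T) + int (ta T) + int (tb T) + int (tc T) \<and>
     hj1 T + hi1 T - hk1 T = int (ty T) + int (ta' T) + int (tb' T) + int (tc' T) \<and>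
     hk1 T - hi1 T - hj0 T = int (tz T) + int (ta T) + int (tb T) + int (tc T) \<and>
     hi1 T - hk0 T + hj0 T = int (tx T) + int (ta' T) + int (tb' T) + int (tc' T) \<and>
     hk0 T - hi0 T - hj0 T = int (ty T) + int (ta T) + int (tb T) + int (tc T) \<and>
     hj1 T - hk0 T + hi0 T = int (tz T) + int (ta' T) + int (tb' T) + int (tc' T) \<and>
     inhex T (tpA T) (tqA T + int (ta T)) \<and> inhex T (tpA T - int (ta T)) (tqA T + int (ta T)) \<and> inhex T (tpA T) (tqA T) \<and>
     inhex T (tpA T) (tqA T - int (ta' T)) \<and> inhex T (tpA T + int (ta' T)) (tqA T - int (ta' T)) \<and>
     inhex T (tpA T) (tqA T - int (tf T)) \<and> inhex T (tpA T + int (tb' T)) (tqA T - int (tf T)) \<and> inhex T (tpA T) (tqA T - int (tf T) + int (tb' T)) \<and>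
     inhex T (tpA T - int (tb T)) (tqA T - int (tf T)) \<and> inhex T (tpA T) (tqA T - int (tf T) - int (tb T)) \<and>
     inhex T (tpA T + int (tf T) - int (tc' T)) (tqA T - int (tf T)) \<and> inhex T (tpA T + int (tf T)) (tqA T - int (tf T)) \<and> inhex T (tpA T + int (tf T) - int (tc' T)) (tqA T - int (tf T) + int (tc' T)) \<and>
     inhex T (tpA T + int (tf T) + int (tc T)) (tqA T - int (tf T)) \<and> inhex T (tpA T + int (tf T) + int (tc T)) (tqA T - int (tf T) - int (tc T))"

lemma up_pts_sub:
  assumes "(p,q) \<in> hex_pts T" "(p + int s, q) \<in> hex_pts T" "(p, q + int s) \<in> hex_pts T"
  shows "up_pts p q s \<subseteq> hex_pts T"
  using assms by (auto simp: up_pts_def hex_pts_def)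

lemma dn_pts_sub:
  assumes "(p,q) \<in> hex_pts T" "(p - int s, q) \<in> hex_pts T" "(p, q - int s) \<in> hex_pts T"
  shows "dn_pts p q s \<subseteq> hex_pts T"
  using assms by (auto simp: dn_pts_def hex_pts_def)

lemma is_triad_lin: "is_triad T \<longleftrightarrow> triad_lin T"
proof
  assume H: "is_triad T"
  have sub: "lobeA_out T \<union> lobeA_in T \<union> lobeB_in T \<union> lobeB_out T \<union> lobeC_in T \<union> lobeC_out T \<subseteq> hex_pts T"
    using H by (simp add: is_triad_def)
  have m: "x \<in> hex_pts T" if "x \<in> lobeA_out T \<union> lobeA_in T \<union> lobeB_in T \<union> lobeB_out T \<union> lobeC_in T \<union> lobeC_out T" for x
    using sub that by blast
  have v: "inhex T (tpA T) (tqA T + int (ta T))" "inhex T (tpA T - int (ta T)) (tqA T + int (ta T))" "inhex T (tpA T) (tqA T)"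
     "inhex T (tpA T) (tqA T - int (ta' T))" "inhex T (tpA T + int (ta' T)) (tqA T - int (ta' T))"
     "inhex T (tpA T) (tqA T - int (tf T))" "inhex T (tpA T + int (tb' T)) (tqA T - int (tf T))" "inhex T (tpA T) (tqA T - int (tf T) + int (tb' T))"
     "inhex T (tpA T - int (tb T)) (tqA T - int (tf T))" "inhex T (tpA T) (tqA T - int (tf T) - int (tb T))"
     "inhex T (tpA T + int (tf T) - int (tc' T)) (tqA T - int (tf T))" "inhex T (tpA T + int (tf T)) (tqA T - int (tf T))" "inhex T (tpA T + int (tf T) - int (tc' T)) (tqA T - int (tf T) + int (tc' T))"
     "inhex T (tpA T + int (tf T) + int (tc T)) (tqA T - int (tf T))" "inhex T (tpA T + int (tf T) + int (tc T)) (tqA T - int (tf T) - int (tc T))"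
    unfolding inhex_iff[symmetric] by (rule m, simp add: lobeA_out_def lobeA_in_def lobeB_in_def lobeB_out_def lobeC_in_def lobeC_out_def
        up_pts_def dn_pts_def ptB_def ptC_def)+
  show "triad_lin T" unfolding triad_lin_def
    using H v by (simp add: is_triad_def lenN_def lenNE_def lenSE_def lenS_def lenSW_def lenNW_def)
next
  assume H: "triad_lin T"
  have "lobeA_out T \<subseteq> hex_pts T" unfolding lobeA_out_def using H
    by (intro dn_pts_sub) (simp_all add: triad_lin_def inhex_iff ptB_def ptC_def algebra_simps)
  moreover have "lobeA_in T \<subseteq> hex_pts T" unfolding lobeA_in_def using H
    by (intro up_pts_sub) (simp_all add: triad_lin_def inhex_iff ptB_def ptC_def algebra_simps)
  moreover have "lobeB_in T \<subseteq> hex_pts T" unfolding lobeB_in_def using H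
    by (intro up_pts_sub) (simp_all add: triad_lin_def inhex_iff ptB_def ptC_def algebra_simps)
  moreover have "lobeB_out T \<subseteq> hex_pts T" unfolding lobeB_out_def using H
    by (intro dn_pts_sub) (simp_all add: triad_lin_def inhex_iff ptB_def ptC_def algebra_simps)
  moreover have "lobeC_in T \<subseteq> hex_pts T" unfolding lobeC_in_def using H
    by (intro up_pts_sub) (simp_all add: triad_lin_def inhex_iff ptB_def ptC_def algebra_simps)
  moreover have "lobeC_out T \<subseteq> hex_pts T" unfolding lobeC_out_def using H
    by (intro dn_pts_sub) (simp_all add: triad_lin_def inhex_iff ptB_def ptC_def algebra_simps)
  ultimately show "is_triad T" using H by (simp add: is_triad_def triad_lin_def lenN_def lenNE_def lenSE_def lenS_def lenSW_def lenNW_def)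
qed

lemmas lin_simps = triad_lin_def hex_pts_def lenN_def lenNE_def lenSE_def lenS_def lenSW_def lenNW_def ptB_def ptC_def ptA_def
   S_depth_def NE_depth_def NW_depth_def

definition inup :: "int \<Rightarrow> int \<Rightarrow> int \<Rightarrow> int \<Rightarrow> int \<Rightarrow> bool" where
  "inup p q s i j \<longleftrightarrow> p \<le> i \<and> q \<le> j \<and> i + j \<le> p + q + s"
definition indn :: "int \<Rightarrow> int \<Rightarrow> int \<Rightarrow> int \<Rightarrow> int \<Rightarrow> bool" where
  "indn p q s i j \<longleftrightarrow> i \<le> p \<and> j \<le> q \<and> p + q - s \<le> i + j"

lemma up_pts_iff: "(i, j) \<in> up_pts p q s \<longleftrightarrow> inup p q (int s) i j" by (simp add: up_pts_def inup_def)
lemma dn_pts_iff: "(i, j) \<in> dn_pts p q s \<longleftrightarrow> indn p q (int s) i j" by (simp add: dn_pts_def indn_def)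

definition lobe3 :: "triad \<Rightarrow> int \<Rightarrow> int \<Rightarrow> int \<Rightarrow> int \<Rightarrow> int \<Rightarrow> int \<Rightarrow> bool" where
  "lobe3 T x1 y1 x2 y2 x3 y3 \<longleftrightarrow>
     (indn (tpA T) (tqA T + int (ta T)) (int (ta T)) x1 y1 \<and> indn (tpA T) (tqA T + int (ta T)) (int (ta T)) x2 y2 \<and> indn (tpA T) (tqA T + int (ta T)) (int (ta T)) x3 y3) \<or>
     (inup (tpA T) (tqA T - int (ta' T)) (int (ta' T)) x1 y1 \<and> inup (tpA T) (tqA T - int (ta' T)) (int (ta' T)) x2 y2 \<and> inup (tpA T) (tqA T - int (ta' T)) (int (ta' T)) x3 y3) \<or>
     (inup (tpA T) (tqA T - int (tf T)) (int (tb' T)) x1 y1 \<and> inup (tpA T) (tqA T - int (tf T)) (int (tb' T)) x2 y2 \<and> inup (tpA T) (tqA T - int (tf T)) (int (tb' T)) x3 y3) \<or>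
     (indn (tpA T) (tqA T - int (tf T)) (int (tb T)) x1 y1 \<and> indn (tpA T) (tqA T - int (tf T)) (int (tb T)) x2 y2 \<and> indn (tpA T) (tqA T - int (tf T)) (int (tb T)) x3 y3) \<or>
     (inup (tpA T + int (tf T) - int (tc' T)) (tqA T - int (tf T)) (int (tc' T)) x1 y1 \<and> inup (tpA T + int (tf T) - int (tc' T)) (tqA T - int (tf T)) (int (tc' T)) x2 y2 \<and> inup (tpA T + int (tf T) - int (tc' T)) (tqA T - int (tf T)) (int (tc' T)) x3 y3) \<or>
     (indn (tpA T + int (tf T) + int (tc T)) (tqA T - int (tf T)) (int (tc T)) x1 y1 \<and> indn (tpA T + int (tf T) + int (tc T)) (tqA T - int (tf T)) (int (tc T)) x2 y2 \<and> indn (tpA T + int (tf T) + int (tc T)) (tqA T - int (tf T)) (int (tc T)) x3 y3)"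

lemma up_mem: "Up i j \<in> triad_region T \<longleftrightarrow>
   inhex T i j \<and> inhex T (i+1) j \<and> inhex T i (j+1) \<and> \<not> lobe3 T i j (i+1) j i (j+1)"
  by (simp add: triad_region_def up_tris_in inhex_iff lobe3_def lobeA_out_def lobeA_in_def lobeB_in_def lobeB_out_def
       lobeC_in_def lobeC_out_def up_pts_iff dn_pts_iff ptB_def ptC_def)

lemma dn_mem: "Dn i j \<in> triad_region T \<longleftrightarrow>
   inhex T (i+1) j \<and> inhex T i (j+1) \<and> inhex T (i+1) (j+1) \<and> \<not> lobe3 T (i+1) j i (j+1) (i+1) (j+1)"
  by (simp add: triad_region_def dn_tris_in inhex_iff lobe3_def lobeA_out_def lobeA_in_def lobeB_in_def lobeB_out_def
       lobeC_in_def lobeC_out_def up_pts_iff dn_pts_iff ptB_def ptC_def)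

definition shift :: "triad \<Rightarrow> triad \<Rightarrow> int \<Rightarrow> int \<Rightarrow> int \<Rightarrow> int \<Rightarrow> int \<Rightarrow> int \<Rightarrow> int \<Rightarrow> int \<Rightarrow> int \<Rightarrow> bool" where
  "shift T T' dx dy dz di0 di1 dj0 dj1 dk0 dk1 \<longleftrightarrow>
     int (tx T') = int (tx T) + dx \<and> int (ty T') = int (ty T) + dy \<and> int (tz T') = int (tz T) + dz \<and>
     int (ta T') = int (ta T) \<and> int (tb T') = int (tb T) \<and> int (tc T') = int (tc T) \<and>
     int (ta' T') = int (ta' T) \<and> int (tb' T') = int (tb' T) \<and> int (tc' T') = int (tc' T) \<and> int (tf T') = int (tf T) \<and>
     tpA T' = tpA T \<and> tqA T' = tqA T \<and>
     hi0 T' = hi0 T + di0 \<and> hi1 T' = hi1 T + di1 \<and> hj0 T' = hj0 T + dj0 \<and> hj1 T' = hj1 T + dj1 \<and>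
     hk0 T' = hk0 T + dk0 \<and> hk1 T' = hk1 T + dk1"

lemma nn: "0 \<le> int (tx T) \<and> 0 \<le> int (ty T) \<and> 0 \<le> int (tz T) \<and> 0 \<le> int (ta T) \<and> 0 \<le> int (tb T) \<and> 0 \<le> int (tc T) \<and>
   0 \<le> int (ta' T) \<and> 0 \<le> int (tb' T) \<and> 0 \<le> int (tc' T) \<and> 0 \<le> int (tf T)" by simp

lemmas flat = triad_lin_def inhex_def lobe3_def inup_def indn_def shift_def S_depth_def NE_depth_def NW_depth_def ptB_def ptA_def fst_conv snd_conv

definition sig :: "triad \<Rightarrow> int" where
  "sig T = (NW_depth T + NE_depth T - int (tx T)) + (NW_depth T + S_depth T - int (ty T)) + (NE_depth T + S_depth T - int (tz T))"

lemma opW_lin: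
  assumes L: "triad_lin T" and c1: "1 \<le> int (tx T)" and c2: "1 \<le> NW_depth T" and c3: "int (ty T) + 1 \<le> NW_depth T + S_depth T"
  and q0: "0 \<le> NE_depth T" and r0: "0 \<le> S_depth T" and p0: "0 \<le> NW_depth T"
  and sh: "shift T T' (-1) 0 0 1 0 0 0 1 0"
  shows "triad_lin T' \<and> 0 \<le> NW_depth T' \<and> 0 \<le> NE_depth T' \<and> 0 \<le> S_depth T' \<and> sig T' + 1 = sig T"
  using assms nn[of T] unfolding flat sig_def by (smt (z3))

lemma opW_tile:
  assumes L: "triad_lin T" and c1: "1 \<le> int (tx T)" and c2: "1 \<le> NW_depth T" and c3: "int (ty T) + 1 \<le> NW_depth T + S_depth T"
  and q0: "0 \<le> NE_depth T" and r0: "0 \<le> S_depth T" and p0: "0 \<le> NW_depth T"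
  and sh: "shift T T' (-1) 0 0 1 0 0 0 1 0"
  and tl: "tileable (triad_region T')"
  shows "tileable (triad_region T)"
proof -
  note F = L c1 c2 c3 q0 r0 p0 sh nn[of T]
  have sub: "triad_region T' \<subseteq> triad_region T"
  proof
    fix t assume "t \<in> triad_region T'"
    thus "t \<in> triad_region T" using F
      by (cases t) (simp_all only: up_mem dn_mem; unfold flat; smt (z3))+
  qed
  define Rb where "Rb = triad_region T - triad_region T'"
  define D where "D = (\<lambda>(i::int) (j::int). (if i = hi0 T then 2 else 1) :: int)"
  have "tileable Rb"
  proof (rule tileable_dir[where D = D])
    show "\<And>i j. Up i j \<in> Rb \<Longrightarrow> D i j = 0 \<or> D i j = 1 \<or> D i j = 2" by (simp add: D_def)
    show "\<And>i j. Up i j \<in> Rb \<Longrightarrow> part (D i j) i j \<in> Rb"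
      unfolding Rb_def D_def part_def Diff_iff using F
      by (simp only: up_mem dn_mem if_distrib[of "\<lambda>x. x \<in> triad_region T"] if_distrib[of "\<lambda>x. x \<in> triad_region T'"]; unfold flat; smt (z3))
    show "\<And>i j. \<not> ((Up i j \<in> Rb \<and> D i j = 2) \<and> (Up (i+1) j \<in> Rb \<and> D (i+1) j = 1))"
      unfolding Rb_def D_def Diff_iff using F
      by (simp only: up_mem dn_mem; unfold flat; smt (z3))
    show "\<And>i j. \<not> ((Up i j \<in> Rb \<and> D i j = 2) \<and> (Up i (j+1) \<in> Rb \<and> D i (j+1) = 0))"
      unfolding Rb_def D_def Diff_iff using F
      by (simp only: up_mem dn_mem; unfold flat; smt (z3))
    show "\<And>i j. \<not> ((Up (i+1) j \<in> Rb \<and> D (i+1) j = 1) \<and> (Up i (j+1) \<in> Rb \<and> D i (j+1) = 0))"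
      unfolding Rb_def D_def Diff_iff using F
      by (simp only: up_mem dn_mem; unfold flat; smt (z3))
    show "\<And>i j. Dn i j \<in> Rb \<Longrightarrow> (Up i j \<in> Rb \<and> D i j = 2) \<or> (Up (i+1) j \<in> Rb \<and> D (i+1) j = 1) \<or> (Up i (j+1) \<in> Rb \<and> D i (j+1) = 0)"
      unfolding Rb_def D_def Diff_iff using F
      by (simp only: up_mem dn_mem; unfold flat; smt (z3))
  qed
  have "triad_region T = triad_region T' \<union> Rb" "triad_region T' \<inter> Rb = {}" using sub by (auto simp: Rb_def)
  thus ?thesis using tileable_union[OF tl \<open>tileable Rb\<close>] by simp
qed

lemma opW_shift:
  assumes "1 \<le> int (tx T)"
  shows "shift T (T\<lparr>tx := tx T - 1, hi0 := hi0 T + 1, hk0 := hk0 T + 1\<rparr>) (-1) 0 0 1 0 0 0 1 0"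
  using assms by (simp add: shift_def of_nat_diff)

lemma opE_lin:
  assumes L: "triad_lin T" and c1: "1 \<le> int (tx T)" and c2: "1 \<le> NE_depth T" and c3: "int (tz T) + 1 \<le> NE_depth T + S_depth T"
  and q0: "0 \<le> NE_depth T" and r0: "0 \<le> S_depth T" and p0: "0 \<le> NW_depth T"
  and sh: "shift T T' (-1) 0 0 0 (-1) 0 0 0 (-1)"
  shows "triad_lin T' \<and> 0 \<le> NW_depth T' \<and> 0 \<le> NE_depth T' \<and> 0 \<le> S_depth T' \<and> sig T' + 1 = sig T"
  using assms nn[of T] unfolding flat sig_def by (smt (z3))

lemma opE_tile:
  assumes L: "triad_lin T" and c1: "1 \<le> int (tx T)" and c2: "1 \<le> NE_depth T" and c3: "int (tz T) + 1 \<le> NE_depth T + S_depth T"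
  and q0: "0 \<le> NE_depth T" and r0: "0 \<le> S_depth T" and p0: "0 \<le> NW_depth T"
  and sh: "shift T T' (-1) 0 0 0 (-1) 0 0 0 (-1)"
  and tl: "tileable (triad_region T')"
  shows "tileable (triad_region T)"
proof -
  note F = L c1 c2 c3 q0 r0 p0 sh nn[of T]
  have sub: "triad_region T' \<subseteq> triad_region T"
  proof
    fix t assume "t \<in> triad_region T'"
    thus "t \<in> triad_region T" using F
      by (cases t) (simp_all only: up_mem dn_mem; unfold flat; smt (z3))+
  qed
  define Rb where "Rb = triad_region T - triad_region T'"
  define D where "D = (\<lambda>(i::int) (j::int). (if i + j + 1 = hk1 T then 1 else 2) :: int)"
  have "tileable Rb"
  proof (rule tileable_dir[where D = D])
    show "\<And>i j. Up i j \<in> Rb \<Longrightarrow> D i j = 0 \<or> D i j = 1 \<or> D i j = 2" by (simp add: D_def)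
    show "\<And>i j. Up i j \<in> Rb \<Longrightarrow> part (D i j) i j \<in> Rb"
      unfolding Rb_def D_def part_def Diff_iff using F
      by (simp only: up_mem dn_mem if_distrib[of "\<lambda>x. x \<in> triad_region T"] if_distrib[of "\<lambda>x. x \<in> triad_region T'"]; unfold flat; smt (z3))
    show "\<And>i j. \<not> ((Up i j \<in> Rb \<and> D i j = 2) \<and> (Up (i+1) j \<in> Rb \<and> D (i+1) j = 1))"
      unfolding Rb_def D_def Diff_iff using F
      by (simp only: up_mem dn_mem; unfold flat; smt (z3))
    show "\<And>i j. \<not> ((Up i j \<in> Rb \<and> D i j = 2) \<and> (Up i (j+1) \<in> Rb \<and> D i (j+1) = 0))"
      unfolding Rb_def D_def Diff_iff using F
      by (simp only: up_mem dn_mem; unfold flat; smt (z3))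
    show "\<And>i j. \<not> ((Up (i+1) j \<in> Rb \<and> D (i+1) j = 1) \<and> (Up i (j+1) \<in> Rb \<and> D i (j+1) = 0))"
      unfolding Rb_def D_def Diff_iff using F
      by (simp only: up_mem dn_mem; unfold flat; smt (z3))
    show "\<And>i j. Dn i j \<in> Rb \<Longrightarrow> (Up i j \<in> Rb \<and> D i j = 2) \<or> (Up (i+1) j \<in> Rb \<and> D (i+1) j = 1) \<or> (Up i (j+1) \<in> Rb \<and> D i (j+1) = 0)"
      unfolding Rb_def D_def Diff_iff using F
      by (simp only: up_mem dn_mem; unfold flat; smt (z3))
  qed
  have "triad_region T = triad_region T' \<union> Rb" "triad_region T' \<inter> Rb = {}" using sub by (auto simp: Rb_def)
  thus ?thesis using tileable_union[OF tl \<open>tileable Rb\<close>] by simp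
qed

lemma opE_shift:
  assumes "1 \<le> int (tx T)"
  shows "shift T (T\<lparr>tx := tx T - 1, hi1 := hi1 T - 1, hk1 := hk1 T - 1\<rparr>) (-1) 0 0 0 (-1) 0 0 0 (-1)"
  using assms by (simp add: shift_def of_nat_diff)

lemma opTL_lin:
  assumes L: "triad_lin T" and c1: "1 \<le> int (ty T)" and c2: "1 \<le> NW_depth T" and c3: "int (tx T) + 1 \<le> NW_depth T + NE_depth T"
  and q0: "0 \<le> NE_depth T" and r0: "0 \<le> S_depth T" and p0: "0 \<le> NW_depth T"
  and sh: "shift T T' 0 (-1) 0 1 0 0 (-1) 0 0"
  shows "triad_lin T' \<and> 0 \<le> NW_depth T' \<and> 0 \<le> NE_depth T' \<and> 0 \<le> S_depth T' \<and> sig T' + 1 = sig T"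
  using assms nn[of T] unfolding flat sig_def by (smt (z3))

lemma opTL_tile:
  assumes L: "triad_lin T" and c1: "1 \<le> int (ty T)" and c2: "1 \<le> NW_depth T" and c3: "int (tx T) + 1 \<le> NW_depth T + NE_depth T"
  and q0: "0 \<le> NE_depth T" and r0: "0 \<le> S_depth T" and p0: "0 \<le> NW_depth T"
  and sh: "shift T T' 0 (-1) 0 1 0 0 (-1) 0 0"
  and tl: "tileable (triad_region T')"
  shows "tileable (triad_region T)"
proof -
  note F = L c1 c2 c3 q0 r0 p0 sh nn[of T]
  have sub: "triad_region T' \<subseteq> triad_region T"
  proof
    fix t assume "t \<in> triad_region T'"
    thus "t \<in> triad_region T" using F
      by (cases t) (simp_all only: up_mem dn_mem; unfold flat; smt (z3))+
  qed
  define Rb where "Rb = triad_region T - triad_region T'"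
  define D where "D = (\<lambda>(i::int) (j::int). (if j = hj1 T - 1 \<and> i \<noteq> hi0 T then 1 else 0) :: int)"
  have "tileable Rb"
  proof (rule tileable_dir[where D = D])
    show "\<And>i j. Up i j \<in> Rb \<Longrightarrow> D i j = 0 \<or> D i j = 1 \<or> D i j = 2" by (simp add: D_def)
    show "\<And>i j. Up i j \<in> Rb \<Longrightarrow> part (D i j) i j \<in> Rb"
      unfolding Rb_def D_def part_def Diff_iff using F
      by (simp only: up_mem dn_mem if_distrib[of "\<lambda>x. x \<in> triad_region T"] if_distrib[of "\<lambda>x. x \<in> triad_region T'"]; unfold flat; smt (z3))
    show "\<And>i j. \<not> ((Up i j \<in> Rb \<and> D i j = 2) \<and> (Up (i+1) j \<in> Rb \<and> D (i+1) j = 1))"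
      unfolding Rb_def D_def Diff_iff using F
      by (simp only: up_mem dn_mem; unfold flat; smt (z3))
    show "\<And>i j. \<not> ((Up i j \<in> Rb \<and> D i j = 2) \<and> (Up i (j+1) \<in> Rb \<and> D i (j+1) = 0))"
      unfolding Rb_def D_def Diff_iff using F
      by (simp only: up_mem dn_mem; unfold flat; smt (z3))
    show "\<And>i j. \<not> ((Up (i+1) j \<in> Rb \<and> D (i+1) j = 1) \<and> (Up i (j+1) \<in> Rb \<and> D i (j+1) = 0))"
      unfolding Rb_def D_def Diff_iff using F
      by (simp only: up_mem dn_mem; unfold flat; smt (z3))
    show "\<And>i j. Dn i j \<in> Rb \<Longrightarrow> (Up i j \<in> Rb \<and> D i j = 2) \<or> (Up (i+1) j \<in> Rb \<and> D (i+1) j = 1) \<or> (Up i (j+1) \<in> Rb \<and> D i (j+1) = 0)"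
      unfolding Rb_def D_def Diff_iff using F
      by (simp only: up_mem dn_mem; unfold flat; smt (z3))
  qed
  have "triad_region T = triad_region T' \<union> Rb" "triad_region T' \<inter> Rb = {}" using sub by (auto simp: Rb_def)
  thus ?thesis using tileable_union[OF tl \<open>tileable Rb\<close>] by simp
qed

lemma opTL_shift:
  assumes "1 \<le> int (ty T)"
  shows "shift T (T\<lparr>ty := ty T - 1, hi0 := hi0 T + 1, hj1 := hj1 T - 1\<rparr>) 0 (-1) 0 1 0 0 (-1) 0 0"
  using assms by (simp add: shift_def of_nat_diff)

lemma opBR_lin:
  assumes L: "triad_lin T" and c1: "1 \<le> int (ty T)" and c2: "1 \<le> S_depth T" and c3: "int (tz T) + 1 \<le> NE_depth T + S_depth T"
  and q0: "0 \<le> NE_depth T" and r0: "0 \<le> S_depth T" and p0: "0 \<le> NW_depth T"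
  and sh: "shift T T' 0 (-1) 0 0 (-1) 1 0 0 0"
  shows "triad_lin T' \<and> 0 \<le> NW_depth T' \<and> 0 \<le> NE_depth T' \<and> 0 \<le> S_depth T' \<and> sig T' + 1 = sig T"
  using assms nn[of T] unfolding flat sig_def by (smt (z3))

lemma opBR_tile:
  assumes L: "triad_lin T" and c1: "1 \<le> int (ty T)" and c2: "1 \<le> S_depth T" and c3: "int (tz T) + 1 \<le> NE_depth T + S_depth T"
  and q0: "0 \<le> NE_depth T" and r0: "0 \<le> S_depth T" and p0: "0 \<le> NW_depth T"
  and sh: "shift T T' 0 (-1) 0 0 (-1) 1 0 0 0"
  and tl: "tileable (triad_region T')"
  shows "tileable (triad_region T)"
proof -
  note F = L c1 c2 c3 q0 r0 p0 sh nn[of T]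
  have sub: "triad_region T' \<subseteq> triad_region T"
  proof
    fix t assume "t \<in> triad_region T'"
    thus "t \<in> triad_region T" using F
      by (cases t) (simp_all only: up_mem dn_mem; unfold flat; smt (z3))+
  qed
  define Rb where "Rb = triad_region T - triad_region T'"
  define D where "D = (\<lambda>(i::int) (j::int). (if j = hj0 T then 1 else 0) :: int)"
  have "tileable Rb"
  proof (rule tileable_dir[where D = D])
    show "\<And>i j. Up i j \<in> Rb \<Longrightarrow> D i j = 0 \<or> D i j = 1 \<or> D i j = 2" by (simp add: D_def)
    show "\<And>i j. Up i j \<in> Rb \<Longrightarrow> part (D i j) i j \<in> Rb"
      unfolding Rb_def D_def part_def Diff_iff using F
      by (simp only: up_mem dn_mem if_distrib[of "\<lambda>x. x \<in> triad_region T"] if_distrib[of "\<lambda>x. x \<in> triad_region T'"]; unfold flat; smt (z3))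
    show "\<And>i j. \<not> ((Up i j \<in> Rb \<and> D i j = 2) \<and> (Up (i+1) j \<in> Rb \<and> D (i+1) j = 1))"
      unfolding Rb_def D_def Diff_iff using F
      by (simp only: up_mem dn_mem; unfold flat; smt (z3))
    show "\<And>i j. \<not> ((Up i j \<in> Rb \<and> D i j = 2) \<and> (Up i (j+1) \<in> Rb \<and> D i (j+1) = 0))"
      unfolding Rb_def D_def Diff_iff using F
      by (simp only: up_mem dn_mem; unfold flat; smt (z3))
    show "\<And>i j. \<not> ((Up (i+1) j \<in> Rb \<and> D (i+1) j = 1) \<and> (Up i (j+1) \<in> Rb \<and> D i (j+1) = 0))"
      unfolding Rb_def D_def Diff_iff using F
      by (simp only: up_mem dn_mem; unfold flat; smt (z3))
    show "\<And>i j. Dn i j \<in> Rb \<Longrightarrow> (Up i j \<in> Rb \<and> D i j = 2) \<or> (Up (i+1) j \<in> Rb \<and> D (i+1) j = 1) \<or> (Up i (j+1) \<in> Rb \<and> D i (j+1) = 0)"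
      unfolding Rb_def D_def Diff_iff using F
      by (simp only: up_mem dn_mem; unfold flat; smt (z3))
  qed
  have "triad_region T = triad_region T' \<union> Rb" "triad_region T' \<inter> Rb = {}" using sub by (auto simp: Rb_def)
  thus ?thesis using tileable_union[OF tl \<open>tileable Rb\<close>] by simp
qed

lemma opBR_shift:
  assumes "1 \<le> int (ty T)"
  shows "shift T (T\<lparr>ty := ty T - 1, hi1 := hi1 T - 1, hj0 := hj0 T + 1\<rparr>) 0 (-1) 0 0 (-1) 1 0 0 0"
  using assms by (simp add: shift_def of_nat_diff)

lemma opTR_lin:
  assumes L: "triad_lin T" and c1: "1 \<le> int (tz T)" and c2: "1 \<le> NE_depth T" and c3: "int (tx T) + 1 \<le> NW_depth T + NE_depth T"
  and q0: "0 \<le> NE_depth T" and r0: "0 \<le> S_depth T" and p0: "0 \<le> NW_depth T"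
  and sh: "shift T T' 0 0 (-1) 0 0 0 (-1) 0 (-1)"
  shows "triad_lin T' \<and> 0 \<le> NW_depth T' \<and> 0 \<le> NE_depth T' \<and> 0 \<le> S_depth T' \<and> sig T' + 1 = sig T"
  using assms nn[of T] unfolding flat sig_def by (smt (z3))

lemma opTR_tile:
  assumes L: "triad_lin T" and c1: "1 \<le> int (tz T)" and c2: "1 \<le> NE_depth T" and c3: "int (tx T) + 1 \<le> NW_depth T + NE_depth T"
  and q0: "0 \<le> NE_depth T" and r0: "0 \<le> S_depth T" and p0: "0 \<le> NW_depth T"
  and sh: "shift T T' 0 0 (-1) 0 0 0 (-1) 0 (-1)"
  and tl: "tileable (triad_region T')"
  shows "tileable (triad_region T)"
proof -
  note F = L c1 c2 c3 q0 r0 p0 sh nn[of T]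
  have sub: "triad_region T' \<subseteq> triad_region T"
  proof
    fix t assume "t \<in> triad_region T'"
    thus "t \<in> triad_region T" using F
      by (cases t) (simp_all only: up_mem dn_mem; unfold flat; smt (z3))+
  qed
  define Rb where "Rb = triad_region T - triad_region T'"
  define D where "D = (\<lambda>(i::int) (j::int). (if i + j + 1 = hk1 T then 0 else 2) :: int)"
  have "tileable Rb"
  proof (rule tileable_dir[where D = D])
    show "\<And>i j. Up i j \<in> Rb \<Longrightarrow> D i j = 0 \<or> D i j = 1 \<or> D i j = 2" by (simp add: D_def)
    show "\<And>i j. Up i j \<in> Rb \<Longrightarrow> part (D i j) i j \<in> Rb"
      unfolding Rb_def D_def part_def Diff_iff using F
      by (simp only: up_mem dn_mem if_distrib[of "\<lambda>x. x \<in> triad_region T"] if_distrib[of "\<lambda>x. x \<in> triad_region T'"]; unfold flat; smt (z3))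
    show "\<And>i j. \<not> ((Up i j \<in> Rb \<and> D i j = 2) \<and> (Up (i+1) j \<in> Rb \<and> D (i+1) j = 1))"
      unfolding Rb_def D_def Diff_iff using F
      by (simp only: up_mem dn_mem; unfold flat; smt (z3))
    show "\<And>i j. \<not> ((Up i j \<in> Rb \<and> D i j = 2) \<and> (Up i (j+1) \<in> Rb \<and> D i (j+1) = 0))"
      unfolding Rb_def D_def Diff_iff using F
      by (simp only: up_mem dn_mem; unfold flat; smt (z3))
    show "\<And>i j. \<not> ((Up (i+1) j \<in> Rb \<and> D (i+1) j = 1) \<and> (Up i (j+1) \<in> Rb \<and> D i (j+1) = 0))"
      unfolding Rb_def D_def Diff_iff using F
      by (simp only: up_mem dn_mem; unfold flat; smt (z3))
    show "\<And>i j. Dn i j \<in> Rb \<Longrightarrow> (Up i j \<in> Rb \<and> D i j = 2) \<or> (Up (i+1) j \<in> Rb \<and> D (i+1) j = 1) \<or> (Up i (j+1) \<in> Rb \<and> D i (j+1) = 0)"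
      unfolding Rb_def D_def Diff_iff using F
      by (simp only: up_mem dn_mem; unfold flat; smt (z3))
  qed
  have "triad_region T = triad_region T' \<union> Rb" "triad_region T' \<inter> Rb = {}" using sub by (auto simp: Rb_def)
  thus ?thesis using tileable_union[OF tl \<open>tileable Rb\<close>] by simp
qed

lemma opTR_shift:
  assumes "1 \<le> int (tz T)"
  shows "shift T (T\<lparr>tz := tz T - 1, hj1 := hj1 T - 1, hk1 := hk1 T - 1\<rparr>) 0 0 (-1) 0 0 0 (-1) 0 (-1)"
  using assms by (simp add: shift_def of_nat_diff)

lemma opBL_lin:
  assumes L: "triad_lin T" and c1: "1 \<le> int (tz T)" and c2: "1 \<le> S_depth T" and c3: "int (ty T) + 1 \<le> NW_depth T + S_depth T"
  and q0: "0 \<le> NE_depth T" and r0: "0 \<le> S_depth T" and p0: "0 \<le> NW_depth T"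
  and sh: "shift T T' 0 0 (-1) 0 0 1 0 1 0"
  shows "triad_lin T' \<and> 0 \<le> NW_depth T' \<and> 0 \<le> NE_depth T' \<and> 0 \<le> S_depth T' \<and> sig T' + 1 = sig T"
  using assms nn[of T] unfolding flat sig_def by (smt (z3))

lemma opBL_tile:
  assumes L: "triad_lin T" and c1: "1 \<le> int (tz T)" and c2: "1 \<le> S_depth T" and c3: "int (ty T) + 1 \<le> NW_depth T + S_depth T"
  and q0: "0 \<le> NE_depth T" and r0: "0 \<le> S_depth T" and p0: "0 \<le> NW_depth T"
  and sh: "shift T T' 0 0 (-1) 0 0 1 0 1 0"
  and tl: "tileable (triad_region T')"
  shows "tileable (triad_region T)"
proof -
  note F = L c1 c2 c3 q0 r0 p0 sh nn[of T]
  have sub: "triad_region T' \<subseteq> triad_region T"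
  proof
    fix t assume "t \<in> triad_region T'"
    thus "t \<in> triad_region T" using F
      by (cases t) (simp_all only: up_mem dn_mem; unfold flat; smt (z3))+
  qed
  define Rb where "Rb = triad_region T - triad_region T'"
  define D where "D = (\<lambda>(i::int) (j::int). (if j = hj0 T then 2 else 0) :: int)"
  have "tileable Rb"
  proof (rule tileable_dir[where D = D])
    show "\<And>i j. Up i j \<in> Rb \<Longrightarrow> D i j = 0 \<or> D i j = 1 \<or> D i j = 2" by (simp add: D_def)
    show "\<And>i j. Up i j \<in> Rb \<Longrightarrow> part (D i j) i j \<in> Rb"
      unfolding Rb_def D_def part_def Diff_iff using F
      by (simp only: up_mem dn_mem if_distrib[of "\<lambda>x. x \<in> triad_region T"] if_distrib[of "\<lambda>x. x \<in> triad_region T'"]; unfold flat; smt (z3))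
    show "\<And>i j. \<not> ((Up i j \<in> Rb \<and> D i j = 2) \<and> (Up (i+1) j \<in> Rb \<and> D (i+1) j = 1))"
      unfolding Rb_def D_def Diff_iff using F
      by (simp only: up_mem dn_mem; unfold flat; smt (z3))
    show "\<And>i j. \<not> ((Up i j \<in> Rb \<and> D i j = 2) \<and> (Up i (j+1) \<in> Rb \<and> D i (j+1) = 0))"
      unfolding Rb_def D_def Diff_iff using F
      by (simp only: up_mem dn_mem; unfold flat; smt (z3))
    show "\<And>i j. \<not> ((Up (i+1) j \<in> Rb \<and> D (i+1) j = 1) \<and> (Up i (j+1) \<in> Rb \<and> D i (j+1) = 0))"
      unfolding Rb_def D_def Diff_iff using F
      by (simp only: up_mem dn_mem; unfold flat; smt (z3))
    show "\<And>i j. Dn i j \<in> Rb \<Longrightarrow> (Up i j \<in> Rb \<and> D i j = 2) \<or> (Up (i+1) j \<in> Rb \<and> D (i+1) j = 1) \<or> (Up i (j+1) \<in> Rb \<and> D i (j+1) = 0)"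
      unfolding Rb_def D_def Diff_iff using F
      by (simp only: up_mem dn_mem; unfold flat; smt (z3))
  qed
  have "triad_region T = triad_region T' \<union> Rb" "triad_region T' \<inter> Rb = {}" using sub by (auto simp: Rb_def)
  thus ?thesis using tileable_union[OF tl \<open>tileable Rb\<close>] by simp
qed

lemma opBL_shift:
  assumes "1 \<le> int (tz T)"
  shows "shift T (T\<lparr>tz := tz T - 1, hj0 := hj0 T + 1, hk0 := hk0 T + 1\<rparr>) 0 0 (-1) 0 0 1 0 1 0"
  using assms by (simp add: shift_def of_nat_diff)

definition bdir :: "int \<Rightarrow> int \<Rightarrow> int \<Rightarrow> int \<Rightarrow> int \<Rightarrow> int \<Rightarrow> int \<Rightarrow> int \<Rightarrow> int \<Rightarrow> int \<Rightarrow> int \<Rightarrow> int \<Rightarrow> int" where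
"bdir a b c a2 b2 c2 p q r f u v = (
  if -(f+b+c+r) \<le> v \<and> v < -f-b \<and> 0 \<le> u+v+f+b \<and> u+v+f+b < p+q+a2+b2 then 1 else
  if -f-b \<le> v \<and> v < -f \<and> 0 \<le> u \<and> u < f-r-c2 then 2 else
  if -(f+b+c+r) \<le> v \<and> v < -f-c \<and> f+c-c2 \<le> u \<and> u < f+c then 2 else
  if -f-c \<le> v \<and> v < -f \<and> -c2 \<le> u+v \<and> u+v < 0 then 1 else
  if -f \<le> v \<and> v < -f+b2+p \<and> 0 \<le> u+v+f-b2 \<and> u+v+f-b2 < p+a2+q then 1 else
  if -f+b2+p \<le> v \<and> v < 0 \<and> -p \<le> u \<and> u < 0 then 2 else
  if 0 \<le> v \<and> v < a \<and> -p \<le> u+v \<and> u+v < 0 then 1 else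
  if -f+b2+p \<le> v \<and> v < -a2 \<and> 0 \<le> u \<and> u < a2+q then 2 else
  if -a2 \<le> v \<and> v < 0 \<and> 0 \<le> u+v \<and> u+v < q then 1 else
  if 0 \<le> v \<and> v < a \<and> 0 \<le> u \<and> u < q then 2 else
  if -f \<le> v \<and> v < -f+a+p \<and> 0 \<le> u+v+f+b \<and> u+v+f+b < b then 1 else
  if -f+a+p \<le> v \<and> v < a \<and> -(a+b+p) \<le> u \<and> u < -(a+p) then 2 else
  if -f \<le> v \<and> v < a+q-f \<and> f \<le> u \<and> u < f+c then 2 else
  if a+q-f \<le> v \<and> v < a \<and> 0 \<le> u+v-a-q \<and> u+v-a-q < c then 1 else 0)"

lemma base_tile:
  assumes L: "triad_lin T" and p0: "0 \<le> NW_depth T" and q0: "0 \<le> NE_depth T" and r0: "0 \<le> S_depth T"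
  and sx: "int (tx T) = NW_depth T + NE_depth T" and sy: "int (ty T) = NW_depth T + S_depth T"
  and sz: "int (tz T) = NE_depth T + S_depth T"
  shows "tileable (triad_region T)"
proof -
  note F = L p0 q0 r0 sx sy sz nn[of T]
  define D where "D = (\<lambda>i j. bdir (int (ta T)) (int (tb T)) (int (tc T)) (int (ta' T)) (int (tb' T)) (int (tc' T))
      (NW_depth T) (NE_depth T) (S_depth T) (int (tf T)) (i - tpA T) (j - tqA T))"
  let ?R = "triad_region T"
  show ?thesis
  proof (rule tileable_dir[where D = D])
    show "\<And>i j. Up i j \<in> ?R \<Longrightarrow> D i j = 0 \<or> D i j = 1 \<or> D i j = 2" by (simp add: D_def bdir_def)
    show "\<And>i j. Up i j \<in> ?R \<Longrightarrow> part (D i j) i j \<in> ?R"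
      unfolding D_def part_def using F
      by (simp only: up_mem dn_mem if_distrib[of "\<lambda>x. x \<in> triad_region T"]; unfold flat bdir_def; smt (z3))
    show "\<And>i j. \<not> ((Up i j \<in> ?R \<and> D i j = 2) \<and> (Up (i+1) j \<in> ?R \<and> D (i+1) j = 1))"
      unfolding D_def using F
      by (simp only: up_mem dn_mem; unfold flat bdir_def; smt (z3))
    show "\<And>i j. \<not> ((Up i j \<in> ?R \<and> D i j = 2) \<and> (Up i (j+1) \<in> ?R \<and> D i (j+1) = 0))"
      unfolding D_def using F
      by (simp only: up_mem dn_mem; unfold flat bdir_def; smt (z3))
    show "\<And>i j. \<not> ((Up (i+1) j \<in> ?R \<and> D (i+1) j = 1) \<and> (Up i (j+1) \<in> ?R \<and> D i (j+1) = 0))"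
      unfolding D_def using F
      by (simp only: up_mem dn_mem; unfold flat bdir_def; smt (z3))
    show "\<And>i j. Dn i j \<in> ?R \<Longrightarrow> (Up i j \<in> ?R \<and> D i j = 2) \<or> (Up (i+1) j \<in> ?R \<and> D (i+1) j = 1) \<or> (Up i (j+1) \<in> ?R \<and> D i (j+1) = 0)"
      unfolding D_def using F
      by (simp only: up_mem dn_mem; unfold flat bdir_def; smt (z3))
  qed
qed

lemma finite_region: "finite (triad_region T)"
proof -
  let ?B = "{hi0 T - 1..hi1 T} \<times> {hj0 T..hj1 T}"
  have "triad_region T \<subseteq> (\<lambda>(i,j). Up i j) ` ?B \<union> (\<lambda>(i,j). Dn i j) ` ?B"
  proof
    fix t assume t: "t \<in> triad_region T"
    show "t \<in> (\<lambda>(i,j). Up i j) ` ?B \<union> (\<lambda>(i,j). Dn i j) ` ?B"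
    proof (cases t)
      case (Up i j)
      hence "inhex T i j" using t by (simp add: up_mem)
      hence "(i,j) \<in> ?B" by (simp add: inhex_def)
      thus ?thesis using Up by blast
    next
      case (Dn i j)
      hence "inhex T (i+1) j" using t by (simp add: dn_mem)
      hence "(i,j) \<in> ?B" by (simp add: inhex_def)
      thus ?thesis using Dn by blast
    qed
  qed
  moreover have "finite ((\<lambda>(i,j). Up i j) ` ?B \<union> (\<lambda>(i,j). Dn i j) ` ?B)" by simp
  ultimately show ?thesis by (rule finite_subset)
qed

lemma loz_cases:
  assumes "is_lozenge L" "Up i j \<in> L"
  shows "L = {Up i j, Dn i j} \<or> L = {Up i j, Dn (i-1) j} \<or> L = {Up i j, Dn i (j-1)}"
proof -
  obtain i' j' where "L = {Up i' j', Dn i' j'} \<or> L = {Up i' j', Dn (i'-1) j'} \<or> L = {Up i' j', Dn i' (j'-1)}"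
    using assms(1) unfolding is_lozenge_def by blast
  thus ?thesis
  proof (elim disjE)
    assume L: "L = {Up i' j', Dn i' j'}"
    hence "i' = i \<and> j' = j" using assms(2) by auto
    thus ?thesis using L by simp
  next
    assume L: "L = {Up i' j', Dn (i'-1) j'}"
    hence "i' = i \<and> j' = j" using assms(2) by auto
    thus ?thesis using L by simp
  next
    assume L: "L = {Up i' j', Dn i' (j'-1)}"
    hence "i' = i \<and> j' = j" using assms(2) by auto
    thus ?thesis using L by simp
  qed
qed

lemma nec_generic:
  fixes R :: "tri set" and PU PD :: "int \<Rightarrow> int \<Rightarrow> bool" and hA hB :: "int \<Rightarrow> int \<Rightarrow> int"
  assumes til: "tileable R" and fin: "finite R"
  and clos: "\<And>i j. Up i j \<in> R \<Longrightarrow> PU i j \<Longrightarrow> (Dn i j \<in> R \<longrightarrow> PD i j) \<and> (Dn (i-1) j \<in> R \<longrightarrow> PD (i-1) j) \<and> (Dn i (j-1) \<in> R \<longrightarrow> PD i (j-1))"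
  and into: "\<And>i j. Dn i j \<in> R \<Longrightarrow> PD i j \<Longrightarrow> Up (hA i j) (hB i j) \<in> R \<and> PU (hA i j) (hB i j)"
  and inj: "\<And>i j i' j'. Dn i j \<in> R \<Longrightarrow> PD i j \<Longrightarrow> Dn i' j' \<in> R \<Longrightarrow> PD i' j' \<Longrightarrow> hA i j = hA i' j' \<Longrightarrow> hB i j = hB i' j' \<Longrightarrow> i = i' \<and> j = j'"
  and m: "Up mA mB \<in> R" "PU mA mB"
  and miss: "\<And>i j. Dn i j \<in> R \<Longrightarrow> PD i j \<Longrightarrow> \<not> (hA i j = mA \<and> hB i j = mB)"
  shows False
proof -
  obtain Ls where T: "lozenge_tiling Ls R" using til unfolding tileable_def by blast
  have Tl: "\<And>L. L \<in> Ls \<Longrightarrow> is_lozenge L" and Td: "\<And>A B. A \<in> Ls \<Longrightarrow> B \<in> Ls \<Longrightarrow> A \<noteq> B \<Longrightarrow> A \<inter> B = {}"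
    and Tu: "\<Union>Ls = R" using T unfolding lozenge_tiling_def by blast+
  define UL where "UL = {t. t \<in> R \<and> (\<exists>i j. t = Up i j \<and> PU i j)}"
  define DL where "DL = {t. t \<in> R \<and> (\<exists>i j. t = Dn i j \<and> PD i j)}"
  define h where "h = (\<lambda>t. case t of Dn i j \<Rightarrow> Up (hA i j) (hB i j) | Up i j \<Rightarrow> Up i j)"
  have finU: "finite UL" and finD: "finite DL" using fin unfolding UL_def DL_def by auto
  have ex: "\<exists>d. \<exists>L\<in>Ls. L = {u, d} \<and> d \<in> DL" if u: "u \<in> UL" for u
  proof -
    from u obtain i j where uij: "u = Up i j" "u \<in> R" "PU i j" unfolding UL_def by blast
    have "u \<in> \<Union>Ls" using Tu uij by simp
    then obtain L where L: "L \<in> Ls" "u \<in> L" by blast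
    have LR: "L \<subseteq> R" using Tu L(1) by blast
    have cl: "(Dn i j \<in> R \<longrightarrow> PD i j) \<and> (Dn (i-1) j \<in> R \<longrightarrow> PD (i-1) j) \<and> (Dn i (j-1) \<in> R \<longrightarrow> PD i (j-1))"
      using clos uij(2,3) unfolding uij(1) by blast
    from loz_cases[OF Tl[OF L(1)] L(2)[unfolded uij(1)]]
    show ?thesis
    proof (elim disjE)
      assume e: "L = {Up i j, Dn i j}"
      hence "Dn i j \<in> DL" using LR cl unfolding DL_def by blast
      thus ?thesis using e L(1) uij(1) by blast
    next
      assume e: "L = {Up i j, Dn (i-1) j}"
      hence "Dn (i-1) j \<in> DL" using LR cl unfolding DL_def by blast
      thus ?thesis using e L(1) uij(1) by blast
    next
      assume e: "L = {Up i j, Dn i (j-1)}"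
      hence "Dn i (j-1) \<in> DL" using LR cl unfolding DL_def by blast
      thus ?thesis using e L(1) uij(1) by blast
    qed
  qed
  define g where "g = (\<lambda>u. SOME d. \<exists>L\<in>Ls. L = {u, d} \<and> d \<in> DL)"
  have g: "\<exists>L\<in>Ls. L = {u, g u} \<and> g u \<in> DL" if "u \<in> UL" for u
    unfolding g_def using someI_ex[OF ex[OF that]] .
  have isUp: "\<exists>i j. u = Up i j" if "u \<in> UL" for u using that unfolding UL_def by blast
  have isDn: "\<exists>i j. d = Dn i j" if "d \<in> DL" for d using that unfolding DL_def by blast
  have "inj_on g UL"
  proof (rule inj_onI)
    fix u1 u2 assume u1: "u1 \<in> UL" and u2: "u2 \<in> UL" and e: "g u1 = g u2"
    obtain L1 where L1: "L1 \<in> Ls" "L1 = {u1, g u1}" "g u1 \<in> DL" using g[OF u1] by blast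
    obtain L2 where L2: "L2 \<in> Ls" "L2 = {u2, g u2}" using g[OF u2] by blast
    have "g u1 \<in> L1 \<inter> L2" using L1(2) L2(2) e by blast
    hence "L1 = L2" using Td[OF L1(1) L2(1)] by blast
    hence "u2 \<in> {u1, g u1}" using L1(2) L2(2) by blast
    moreover have "u2 \<noteq> g u1" using isUp[OF u2] isDn[OF L1(3)] by auto
    ultimately show "u1 = u2" by blast
  qed
  moreover have "g ` UL \<subseteq> DL" using g by blast
  ultimately have c1: "card UL \<le> card DL" using card_inj_on_le finD by blast
  have injh: "inj_on h DL"
  proof (rule inj_onI)
    fix d1 d2 assume d1: "d1 \<in> DL" and d2: "d2 \<in> DL" and e: "h d1 = h d2"
    obtain i j where a: "d1 = Dn i j" "Dn i j \<in> R" "PD i j" using d1 unfolding DL_def by blast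
    obtain i' j' where b: "d2 = Dn i' j'" "Dn i' j' \<in> R" "PD i' j'" using d2 unfolding DL_def by blast
    have "hA i j = hA i' j'" "hB i j = hB i' j'" using e a(1) b(1) unfolding h_def by simp_all
    thus "d1 = d2" using inj[OF a(2,3) b(2,3)] a(1) b(1) by simp
  qed
  have hsub: "h ` DL \<subseteq> UL"
  proof
    fix u assume "u \<in> h ` DL"
    then obtain d where d: "d \<in> DL" "u = h d" by blast
    then obtain i j where a: "d = Dn i j" "Dn i j \<in> R" "PD i j" unfolding DL_def by blast
    have "u = Up (hA i j) (hB i j)" using d(2) a(1) unfolding h_def by simp
    thus "u \<in> UL" using into[OF a(2,3)] unfolding UL_def by blast
  qed
  have mU: "Up mA mB \<in> UL" using m unfolding UL_def by blast
  have mn: "Up mA mB \<notin> h ` DL"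
  proof
    assume "Up mA mB \<in> h ` DL"
    then obtain d where d: "d \<in> DL" "Up mA mB = h d" by blast
    then obtain i j where a: "d = Dn i j" "Dn i j \<in> R" "PD i j" unfolding DL_def by blast
    have "hA i j = mA \<and> hB i j = mB" using d(2) a(1) unfolding h_def by simp
    thus False using miss[OF a(2,3)] by blast
  qed
  have "h ` DL \<subset> UL" using hsub mU mn by blast
  hence "card (h ` DL) < card UL" by (rule psubset_card_mono[OF finU])
  moreover have "card (h ` DL) = card DL" using injh by (rule card_image)
  ultimately show False using c1 by simp
qed

definition "sA T = (\<lambda>i j. if j < tqA T - int (tf T) - 1 then i else
      i + (tqA T - int (tf T) - hj0 T) - (if tpA T \<le> i then int (tb T) else 0) - (if tpA T + int (tf T) + int (tc T) \<le> i then int (tc T) else 0))"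
definition "sB T = (\<lambda>(i::int) j. if j < tqA T - int (tf T) - 1 then j + 1 else hj0 T)"

lemma S_into: "triad_lin T \<Longrightarrow> S_depth T < 0 \<Longrightarrow> Dn i j \<in> triad_region T \<Longrightarrow> j < tqA T - int (tf T) \<Longrightarrow>
   Up (sA T i j) (sB T i j) \<in> triad_region T \<and> sB T i j < tqA T - int (tf T)"
  using nn[of T] unfolding sA_def sB_def
  by (cases "j < tqA T - int (tf T) - 1"; cases "tpA T \<le> i"; cases "tpA T + int (tf T) + int (tc T) \<le> i"; simp only: up_mem dn_mem if_True if_False; unfold flat; smt (z3))

lemma S_miss: "triad_lin T \<Longrightarrow> S_depth T < 0 \<Longrightarrow> Dn i j \<in> triad_region T \<Longrightarrow> j < tqA T - int (tf T) \<Longrightarrow>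
   \<not> (sA T i j = hi1 T - 1 \<and> sB T i j = hj0 T)"
  using nn[of T] unfolding sA_def sB_def
  by (cases "j < tqA T - int (tf T) - 1"; cases "tpA T \<le> i"; cases "tpA T + int (tf T) + int (tc T) \<le> i"; simp only: up_mem dn_mem if_True if_False; unfold flat; smt (z3))

lemma S_m: "triad_lin T \<Longrightarrow> S_depth T < 0 \<Longrightarrow> Up (hi1 T - 1) (hj0 T) \<in> triad_region T \<and> (hj0 T) < tqA T - int (tf T)"
  using nn[of T] by (simp only: up_mem dn_mem; unfold flat; smt (z3))

lemma S_inj:
  assumes L: "triad_lin T" and neg: "S_depth T < 0" and d1: "Dn i j \<in> triad_region T" "j < tqA T - int (tf T)"
    and d2: "Dn i' j' \<in> triad_region T" "j' < tqA T - int (tf T)"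
    and e: "sA T i j = sA T i' j'" "sB T i j = sB T i' j'"
  shows "i = i' \<and> j = j'"
proof -
  note F = L neg d1 d2 e nn[of T]
  consider (a) "j < tqA T - int (tf T) - 1" "j' < tqA T - int (tf T) - 1" | (b) "j < tqA T - int (tf T) - 1" "\<not> (j' < tqA T - int (tf T) - 1)" | (c) "\<not> (j < tqA T - int (tf T) - 1)" "j' < tqA T - int (tf T) - 1"
    | (d) "\<not> (j < tqA T - int (tf T) - 1)" "\<not> (j' < tqA T - int (tf T) - 1)" by blast
  then show ?thesis
  proof cases
    case a thus ?thesis using F unfolding sA_def sB_def by (simp only: up_mem dn_mem if_True if_False; unfold flat; smt (z3))
  next
    case b thus ?thesis using F unfolding sA_def sB_def by (simp only: up_mem dn_mem if_True if_False; unfold flat; smt (z3))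
  next
    case c thus ?thesis using F unfolding sA_def sB_def by (simp only: up_mem dn_mem if_True if_False; unfold flat; smt (z3))
  next
    case d thus ?thesis using F unfolding sA_def sB_def
      by (cases "tpA T \<le> i"; cases "tpA T + int (tf T) + int (tc T) \<le> i"; cases "tpA T \<le> i'"; cases "tpA T + int (tf T) + int (tc T) \<le> i'"; simp only: up_mem dn_mem if_True if_False; unfold flat; smt (z3))
  qed
qed

lemma nec_S:
  assumes L: "triad_lin T" and neg: "S_depth T < 0" and til: "tileable (triad_region T)"
  shows False
proof (rule nec_generic[where PU = "\<lambda>i j. j < tqA T - int (tf T)" and PD = "\<lambda>i j. j < tqA T - int (tf T)" and hA = "sA T" and hB = "sB T"
        and mA = "hi1 T - 1" and mB = "hj0 T", OF til finite_region])
  show "\<And>i j. Up i j \<in> triad_region T \<Longrightarrow> j < tqA T - int (tf T) \<Longrightarrow> (Dn i j \<in> triad_region T \<longrightarrow> j < tqA T - int (tf T)) \<and>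
       (Dn (i-1) j \<in> triad_region T \<longrightarrow> j < tqA T - int (tf T)) \<and> (Dn i (j-1) \<in> triad_region T \<longrightarrow> (j-1) < tqA T - int (tf T))" by simp
  show "\<And>i j. Dn i j \<in> triad_region T \<Longrightarrow> j < tqA T - int (tf T) \<Longrightarrow> Up (sA T i j) (sB T i j) \<in> triad_region T \<and> sB T i j < tqA T - int (tf T)"
    using S_into[OF L neg] by blast
  show "\<And>i j i' j'. Dn i j \<in> triad_region T \<Longrightarrow> j < tqA T - int (tf T) \<Longrightarrow> Dn i' j' \<in> triad_region T \<Longrightarrow> j' < tqA T - int (tf T) \<Longrightarrow>
        sA T i j = sA T i' j' \<Longrightarrow> sB T i j = sB T i' j' \<Longrightarrow> i = i' \<and> j = j'"
    using S_inj[OF L neg] by blast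
  show "Up (hi1 T - 1) (hj0 T) \<in> triad_region T" "(hj0 T) < tqA T - int (tf T)" using S_m[OF L neg] by blast+
  show "\<And>i j. Dn i j \<in> triad_region T \<Longrightarrow> j < tqA T - int (tf T) \<Longrightarrow> \<not> (sA T i j = hi1 T - 1 \<and> sB T i j = hj0 T)"
    using S_miss[OF L neg] by blast
qed

definition "wA T = (\<lambda>i (j::int). if i < tpA T - 1 then i + 1 else hi0 T)"
definition "wB T = (\<lambda>i j. if i < tpA T - 1 then j else
      j + (if j < tqA T then int (ta T) else 0) + (if j < tqA T - int (tf T) - int (tb T) then int (tb T) else 0))"

lemma NW_into: "triad_lin T \<Longrightarrow> NW_depth T < 0 \<Longrightarrow> Dn i j \<in> triad_region T \<Longrightarrow> i + 1 \<le> tpA T \<Longrightarrow>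
   Up (wA T i j) (wB T i j) \<in> triad_region T \<and> wA T i j + 1 \<le> tpA T"
  using nn[of T] unfolding wA_def wB_def
  by (cases "i < tpA T - 1"; cases "j < tqA T"; cases "j < tqA T - int (tf T) - int (tb T)"; simp only: up_mem dn_mem if_True if_False; unfold flat; smt (z3))

lemma NW_miss: "triad_lin T \<Longrightarrow> NW_depth T < 0 \<Longrightarrow> Dn i j \<in> triad_region T \<Longrightarrow> i + 1 \<le> tpA T \<Longrightarrow>
   \<not> (wA T i j = hi0 T \<and> wB T i j = hk0 T - hi0 T)"
  using nn[of T] unfolding wA_def wB_def
  by (cases "i < tpA T - 1"; cases "j < tqA T"; cases "j < tqA T - int (tf T) - int (tb T)"; simp only: up_mem dn_mem if_True if_False; unfold flat; smt (z3))

lemma NW_m: "triad_lin T \<Longrightarrow> NW_depth T < 0 \<Longrightarrow> Up (hi0 T) (hk0 T - hi0 T) \<in> triad_region T \<and> (hi0 T) + 1 \<le> tpA T"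
  using nn[of T] by (simp only: up_mem dn_mem; unfold flat; smt (z3))

lemma NW_inj:
  assumes L: "triad_lin T" and neg: "NW_depth T < 0" and d1: "Dn i j \<in> triad_region T" "i + 1 \<le> tpA T"
    and d2: "Dn i' j' \<in> triad_region T" "i' + 1 \<le> tpA T"
    and e: "wA T i j = wA T i' j'" "wB T i j = wB T i' j'"
  shows "i = i' \<and> j = j'"
proof -
  note F = L neg d1 d2 e nn[of T]
  consider (a) "i < tpA T - 1" "i' < tpA T - 1" | (b) "i < tpA T - 1" "\<not> (i' < tpA T - 1)" | (c) "\<not> (i < tpA T - 1)" "i' < tpA T - 1"
    | (d) "\<not> (i < tpA T - 1)" "\<not> (i' < tpA T - 1)" by blast
  then show ?thesis
  proof cases
    case a thus ?thesis using F unfolding wA_def wB_def by (simp only: up_mem dn_mem if_True if_False; unfold flat; smt (z3))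
  next
    case b thus ?thesis using F unfolding wA_def wB_def by (simp only: up_mem dn_mem if_True if_False; unfold flat; smt (z3))
  next
    case c thus ?thesis using F unfolding wA_def wB_def by (simp only: up_mem dn_mem if_True if_False; unfold flat; smt (z3))
  next
    case d thus ?thesis using F unfolding wA_def wB_def
      by (cases "j < tqA T"; cases "j < tqA T - int (tf T) - int (tb T)"; cases "j' < tqA T"; cases "j' < tqA T - int (tf T) - int (tb T)"; simp only: up_mem dn_mem if_True if_False; unfold flat; smt (z3))
  qed
qed

lemma nec_NW:
  assumes L: "triad_lin T" and neg: "NW_depth T < 0" and til: "tileable (triad_region T)"
  shows False
proof (rule nec_generic[where PU = "\<lambda>i j. i + 1 \<le> tpA T" and PD = "\<lambda>i j. i + 1 \<le> tpA T" and hA = "wA T" and hB = "wB T"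
        and mA = "hi0 T" and mB = "hk0 T - hi0 T", OF til finite_region])
  show "\<And>i j. Up i j \<in> triad_region T \<Longrightarrow> i + 1 \<le> tpA T \<Longrightarrow> (Dn i j \<in> triad_region T \<longrightarrow> i + 1 \<le> tpA T) \<and>
       (Dn (i-1) j \<in> triad_region T \<longrightarrow> (i-1) + 1 \<le> tpA T) \<and> (Dn i (j-1) \<in> triad_region T \<longrightarrow> i + 1 \<le> tpA T)" by simp
  show "\<And>i j. Dn i j \<in> triad_region T \<Longrightarrow> i + 1 \<le> tpA T \<Longrightarrow> Up (wA T i j) (wB T i j) \<in> triad_region T \<and> wA T i j + 1 \<le> tpA T"
    using NW_into[OF L neg] by blast
  show "\<And>i j i' j'. Dn i j \<in> triad_region T \<Longrightarrow> i + 1 \<le> tpA T \<Longrightarrow> Dn i' j' \<in> triad_region T \<Longrightarrow> i' + 1 \<le> tpA T \<Longrightarrow>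
        wA T i j = wA T i' j' \<Longrightarrow> wB T i j = wB T i' j' \<Longrightarrow> i = i' \<and> j = j'"
    using NW_inj[OF L neg] by blast
  show "Up (hi0 T) (hk0 T - hi0 T) \<in> triad_region T" "(hi0 T) + 1 \<le> tpA T" using NW_m[OF L neg] by blast+
  show "\<And>i j. Dn i j \<in> triad_region T \<Longrightarrow> i + 1 \<le> tpA T \<Longrightarrow> \<not> (wA T i j = hi0 T \<and> wB T i j = hk0 T - hi0 T)"
    using NW_miss[OF L neg] by blast
qed

definition "ph T = (\<lambda>j. j + hk1 T - (tpA T + tqA T) - (if tqA T - int (tf T) \<le> j then int (tc T) else 0) - (if tqA T + int (ta T) \<le> j then int (ta T) else 0))"
definition "eA T = (\<lambda>i j. if tpA T + tqA T < i + j + 1 then i else hk1 T - 1 - ph T j)"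
definition "eB T = (\<lambda>i j. if tpA T + tqA T < i + j + 1 then j else ph T j)"

lemma NE_into: "triad_lin T \<Longrightarrow> NE_depth T < 0 \<Longrightarrow> Dn i j \<in> triad_region T \<Longrightarrow> tpA T + tqA T \<le> i + j + 1 \<Longrightarrow>
   Up (eA T i j) (eB T i j) \<in> triad_region T \<and> tpA T + tqA T \<le> eA T i j + eB T i j"
  using nn[of T] unfolding eA_def eB_def ph_def
  by (cases "tpA T + tqA T < i + j + 1"; cases "tqA T - int (tf T) \<le> j"; cases "tqA T + int (ta T) \<le> j"; simp only: up_mem dn_mem if_True if_False; unfold flat; smt (z3))

lemma NE_miss: "triad_lin T \<Longrightarrow> NE_depth T < 0 \<Longrightarrow> Dn i j \<in> triad_region T \<Longrightarrow> tpA T + tqA T \<le> i + j + 1 \<Longrightarrow>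
   \<not> (eA T i j = hk1 T - hj1 T \<and> eB T i j = hj1 T - 1)"
  using nn[of T] unfolding eA_def eB_def ph_def
  by (cases "tpA T + tqA T < i + j + 1"; cases "tqA T - int (tf T) \<le> j"; cases "tqA T + int (ta T) \<le> j"; simp only: up_mem dn_mem if_True if_False; unfold flat; smt (z3))

lemma NE_m: "triad_lin T \<Longrightarrow> NE_depth T < 0 \<Longrightarrow> Up (hk1 T - hj1 T) (hj1 T - 1) \<in> triad_region T \<and> tpA T + tqA T \<le> (hk1 T - hj1 T) + (hj1 T - 1)"
  using nn[of T] by (simp only: up_mem dn_mem; unfold flat; smt (z3))

lemma NE_inj:
  assumes L: "triad_lin T" and neg: "NE_depth T < 0" and d1: "Dn i j \<in> triad_region T" "tpA T + tqA T \<le> i + j + 1"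
    and d2: "Dn i' j' \<in> triad_region T" "tpA T + tqA T \<le> i' + j' + 1"
    and e: "eA T i j = eA T i' j'" "eB T i j = eB T i' j'"
  shows "i = i' \<and> j = j'"
proof -
  note F = L neg d1 d2 e nn[of T]
  consider (a) "tpA T + tqA T < i + j + 1" "tpA T + tqA T < i' + j' + 1" | (b) "tpA T + tqA T < i + j + 1" "\<not> (tpA T + tqA T < i' + j' + 1)" | (c) "\<not> (tpA T + tqA T < i + j + 1)" "tpA T + tqA T < i' + j' + 1"
    | (d) "\<not> (tpA T + tqA T < i + j + 1)" "\<not> (tpA T + tqA T < i' + j' + 1)" by blast
  then show ?thesis
  proof cases
    case a thus ?thesis using F unfolding eA_def eB_def ph_def by (simp only: up_mem dn_mem if_True if_False; unfold flat; smt (z3))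
  next
    case b thus ?thesis using F unfolding eA_def eB_def ph_def by (simp only: up_mem dn_mem if_True if_False; unfold flat; smt (z3))
  next
    case c thus ?thesis using F unfolding eA_def eB_def ph_def by (simp only: up_mem dn_mem if_True if_False; unfold flat; smt (z3))
  next
    case d thus ?thesis using F unfolding eA_def eB_def ph_def
      by (cases "tqA T - int (tf T) \<le> j"; cases "tqA T + int (ta T) \<le> j"; cases "tqA T - int (tf T) \<le> j'"; cases "tqA T + int (ta T) \<le> j'"; simp only: up_mem dn_mem if_True if_False; unfold flat; smt (z3))
  qed
qed

lemma nec_NE:
  assumes L: "triad_lin T" and neg: "NE_depth T < 0" and til: "tileable (triad_region T)"
  shows False
proof (rule nec_generic[where PU = "\<lambda>i j. tpA T + tqA T \<le> i + j" and PD = "\<lambda>i j. tpA T + tqA T \<le> i + j + 1" and hA = "eA T" and hB = "eB T"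
        and mA = "hk1 T - hj1 T" and mB = "hj1 T - 1", OF til finite_region])
  show "\<And>i j. Up i j \<in> triad_region T \<Longrightarrow> tpA T + tqA T \<le> i + j \<Longrightarrow> (Dn i j \<in> triad_region T \<longrightarrow> tpA T + tqA T \<le> i + j + 1) \<and>
       (Dn (i-1) j \<in> triad_region T \<longrightarrow> tpA T + tqA T \<le> (i-1) + j + 1) \<and> (Dn i (j-1) \<in> triad_region T \<longrightarrow> tpA T + tqA T \<le> i + (j-1) + 1)" by simp
  show "\<And>i j. Dn i j \<in> triad_region T \<Longrightarrow> tpA T + tqA T \<le> i + j + 1 \<Longrightarrow> Up (eA T i j) (eB T i j) \<in> triad_region T \<and> tpA T + tqA T \<le> eA T i j + eB T i j"
    using NE_into[OF L neg] by blast
  show "\<And>i j i' j'. Dn i j \<in> triad_region T \<Longrightarrow> tpA T + tqA T \<le> i + j + 1 \<Longrightarrow> Dn i' j' \<in> triad_region T \<Longrightarrow> tpA T + tqA T \<le> i' + j' + 1 \<Longrightarrow>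
        eA T i j = eA T i' j' \<Longrightarrow> eB T i j = eB T i' j' \<Longrightarrow> i = i' \<and> j = j'"
    using NE_inj[OF L neg] by blast
  show "Up (hk1 T - hj1 T) (hj1 T - 1) \<in> triad_region T" "tpA T + tqA T \<le> (hk1 T - hj1 T) + (hj1 T - 1)" using NE_m[OF L neg] by blast+
  show "\<And>i j. Dn i j \<in> triad_region T \<Longrightarrow> tpA T + tqA T \<le> i + j + 1 \<Longrightarrow> \<not> (eA T i j = hk1 T - hj1 T \<and> eB T i j = hj1 T - 1)"
    using NE_miss[OF L neg] by blast
qed

lemma sig_nonneg: "triad_lin T \<Longrightarrow> 0 \<le> NW_depth T \<Longrightarrow> 0 \<le> NE_depth T \<Longrightarrow> 0 \<le> S_depth T \<Longrightarrow>
   0 \<le> NW_depth T + NE_depth T - int (tx T) \<and> 0 \<le> NW_depth T + S_depth T - int (ty T) \<and> 0 \<le> NE_depth T + S_depth T - int (tz T)"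
  using nn[of T] unfolding flat by (smt (z3))

lemma suff:
  assumes "triad_lin T" "0 \<le> NW_depth T" "0 \<le> NE_depth T" "0 \<le> S_depth T"
  shows "tileable (triad_region T)"
  using assms
proof (induction "nat (sig T)" arbitrary: T rule: less_induct)
  case less
  have s: "0 \<le> NW_depth T + NE_depth T - int (tx T) \<and> 0 \<le> NW_depth T + S_depth T - int (ty T) \<and> 0 \<le> NE_depth T + S_depth T - int (tz T)"
    using sig_nonneg less.prems by blast
  show ?case
  proof (cases "sig T = 0")
    case True
    hence "int (tx T) = NW_depth T + NE_depth T" "int (ty T) = NW_depth T + S_depth T" "int (tz T) = NE_depth T + S_depth T"
      using s unfolding sig_def by linarith+
    thus ?thesis using base_tile less.prems by blast
  next
    case False
    hence pos: "0 < sig T" using s unfolding sig_def by linarith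
    have "(1 \<le> int (tx T) \<and> 1 \<le> NW_depth T \<and> int (ty T) + 1 \<le> NW_depth T + S_depth T) \<or>
          (1 \<le> int (tx T) \<and> 1 \<le> NE_depth T \<and> int (tz T) + 1 \<le> NE_depth T + S_depth T) \<or>
          (1 \<le> int (ty T) \<and> 1 \<le> NW_depth T \<and> int (tx T) + 1 \<le> NW_depth T + NE_depth T) \<or>
          (1 \<le> int (ty T) \<and> 1 \<le> S_depth T \<and> int (tz T) + 1 \<le> NE_depth T + S_depth T) \<or>
          (1 \<le> int (tz T) \<and> 1 \<le> NE_depth T \<and> int (tx T) + 1 \<le> NW_depth T + NE_depth T) \<or>
          (1 \<le> int (tz T) \<and> 1 \<le> S_depth T \<and> int (ty T) + 1 \<le> NW_depth T + S_depth T)"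
      using pos less.prems nn[of T] unfolding flat sig_def by (smt (z3))
    thus ?thesis
    proof (elim disjE conjE)
      assume c: "1 \<le> int (tx T)" "1 \<le> NW_depth T" "int (ty T) + 1 \<le> NW_depth T + S_depth T"
      let ?T' = "T\<lparr>tx := tx T - 1, hi0 := hi0 T + 1, hk0 := hk0 T + 1\<rparr>"
      have sh: "shift T ?T' (-1) 0 0 1 0 0 0 1 0" using opW_shift c by blast
      note l = opW_lin[OF less.prems(1) c less.prems(3,4,2) sh]
      have lt: "nat (sig ?T') < nat (sig T)" using l pos by (simp add: zless_nat_conj)
      have "tileable (triad_region ?T')" using less.hyps[OF lt] l by blast
      thus ?thesis using opW_tile[OF less.prems(1) c less.prems(3,4,2) sh] by blast
    next
      assume c: "1 \<le> int (tx T)" "1 \<le> NE_depth T" "int (tz T) + 1 \<le> NE_depth T + S_depth T"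
      let ?T' = "T\<lparr>tx := tx T - 1, hi1 := hi1 T - 1, hk1 := hk1 T - 1\<rparr>"
      have sh: "shift T ?T' (-1) 0 0 0 (-1) 0 0 0 (-1)" using opE_shift c by blast
      note l = opE_lin[OF less.prems(1) c less.prems(3,4,2) sh]
      have lt: "nat (sig ?T') < nat (sig T)" using l pos by (simp add: zless_nat_conj)
      have "tileable (triad_region ?T')" using less.hyps[OF lt] l by blast
      thus ?thesis using opE_tile[OF less.prems(1) c less.prems(3,4,2) sh] by blast
    next
      assume c: "1 \<le> int (ty T)" "1 \<le> NW_depth T" "int (tx T) + 1 \<le> NW_depth T + NE_depth T"
      let ?T' = "T\<lparr>ty := ty T - 1, hi0 := hi0 T + 1, hj1 := hj1 T - 1\<rparr>"
      have sh: "shift T ?T' 0 (-1) 0 1 0 0 (-1) 0 0" using opTL_shift c by blast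
      note l = opTL_lin[OF less.prems(1) c less.prems(3,4,2) sh]
      have lt: "nat (sig ?T') < nat (sig T)" using l pos by (simp add: zless_nat_conj)
      have "tileable (triad_region ?T')" using less.hyps[OF lt] l by blast
      thus ?thesis using opTL_tile[OF less.prems(1) c less.prems(3,4,2) sh] by blast
    next
      assume c: "1 \<le> int (ty T)" "1 \<le> S_depth T" "int (tz T) + 1 \<le> NE_depth T + S_depth T"
      let ?T' = "T\<lparr>ty := ty T - 1, hi1 := hi1 T - 1, hj0 := hj0 T + 1\<rparr>"
      have sh: "shift T ?T' 0 (-1) 0 0 (-1) 1 0 0 0" using opBR_shift c by blast
      note l = opBR_lin[OF less.prems(1) c less.prems(3,4,2) sh]
      have lt: "nat (sig ?T') < nat (sig T)" using l pos by (simp add: zless_nat_conj)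
      have "tileable (triad_region ?T')" using less.hyps[OF lt] l by blast
      thus ?thesis using opBR_tile[OF less.prems(1) c less.prems(3,4,2) sh] by blast
    next
      assume c: "1 \<le> int (tz T)" "1 \<le> NE_depth T" "int (tx T) + 1 \<le> NW_depth T + NE_depth T"
      let ?T' = "T\<lparr>tz := tz T - 1, hj1 := hj1 T - 1, hk1 := hk1 T - 1\<rparr>"
      have sh: "shift T ?T' 0 0 (-1) 0 0 0 (-1) 0 (-1)" using opTR_shift c by blast
      note l = opTR_lin[OF less.prems(1) c less.prems(3,4,2) sh]
      have lt: "nat (sig ?T') < nat (sig T)" using l pos by (simp add: zless_nat_conj)
      have "tileable (triad_region ?T')" using less.hyps[OF lt] l by blast
      thus ?thesis using opTR_tile[OF less.prems(1) c less.prems(3,4,2) sh] by blast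
    next
      assume c: "1 \<le> int (tz T)" "1 \<le> S_depth T" "int (ty T) + 1 \<le> NW_depth T + S_depth T"
      let ?T' = "T\<lparr>tz := tz T - 1, hj0 := hj0 T + 1, hk0 := hk0 T + 1\<rparr>"
      have sh: "shift T ?T' 0 0 (-1) 0 0 1 0 1 0" using opBL_shift c by blast
      note l = opBL_lin[OF less.prems(1) c less.prems(3,4,2) sh]
      have lt: "nat (sig ?T') < nat (sig T)" using l pos by (simp add: zless_nat_conj)
      have "tileable (triad_region ?T')" using less.hyps[OF lt] l by blast
      thus ?thesis using opBL_tile[OF less.prems(1) c less.prems(3,4,2) sh] by blast
    qed
  qed
qed

lemma part_a: "is_triad T \<Longrightarrow> tileable (triad_region T) \<longleftrightarrow> 0 \<le> S_depth T \<and> 0 \<le> NE_depth T \<and> 0 \<le> NW_depth T"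
proof -
  assume T: "is_triad T"
  hence L: "triad_lin T" by (simp add: is_triad_lin)
  show ?thesis
  proof
    assume t: "tileable (triad_region T)"
    show "0 \<le> S_depth T \<and> 0 \<le> NE_depth T \<and> 0 \<le> NW_depth T"
    proof (intro conjI)
      show "0 \<le> S_depth T" using nec_S[OF L _ t] not_le by blast
      show "0 \<le> NE_depth T" using nec_NE[OF L _ t] not_le by blast
      show "0 \<le> NW_depth T" using nec_NW[OF L _ t] not_le by blast
    qed
  next
    assume "0 \<le> S_depth T \<and> 0 \<le> NE_depth T \<and> 0 \<le> NW_depth T"
    thus "tileable (triad_region T)" using suff[OF L] by blast
  qed
qed

lemma depthsA: "is_triad T \<Longrightarrow> d \<le> ta' T \<Longrightarrow>
  S_depth (squeeze_out_A d T) = S_depth T \<and> NE_depth (squeeze_out_A d T) = NE_depth T \<and> NW_depth (squeeze_out_A d T) = NW_depth T"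
proof -
  assume T: "is_triad T" and d: "d \<le> ta' T"
  have "ta' T \<le> tf T" using T by (simp add: is_triad_def)
  hence "d \<le> tf T" using d by simp
  thus ?thesis by (simp add: squeeze_out_A_def S_depth_def NE_depth_def NW_depth_def ptB_def ptA_def of_nat_diff)
qed

lemma depthsB: "is_triad T \<Longrightarrow> d \<le> tb' T \<Longrightarrow>
  S_depth (squeeze_out_B d T) = S_depth T \<and> NE_depth (squeeze_out_B d T) = NE_depth T \<and> NW_depth (squeeze_out_B d T) = NW_depth T"
proof -
  assume T: "is_triad T" and d: "d \<le> tb' T"
  have "tb' T \<le> tf T" using T by (simp add: is_triad_def)
  hence "d \<le> tf T" using d by simp
  thus ?thesis by (simp add: squeeze_out_B_def S_depth_def NE_depth_def NW_depth_def ptB_def ptA_def of_nat_diff)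
qed

lemma depthsC: "is_triad T \<Longrightarrow> d \<le> tc' T \<Longrightarrow>
  S_depth (squeeze_out_C d T) = S_depth T \<and> NE_depth (squeeze_out_C d T) = NE_depth T \<and> NW_depth (squeeze_out_C d T) = NW_depth T"
proof -
  assume T: "is_triad T" and d: "d \<le> tc' T"
  have "tc' T \<le> tf T" using T by (simp add: is_triad_def)
  hence "d \<le> tf T" using d by simp
  thus ?thesis by (simp add: squeeze_out_C_def S_depth_def NE_depth_def NW_depth_def ptB_def ptA_def of_nat_diff)
qed

lemma part_b: "squeeze_step T T' \<Longrightarrow>
   S_depth T' = S_depth T \<and> NE_depth T' = NE_depth T \<and> NW_depth T' = NW_depth T"
  unfolding squeeze_step_def
  by (elim conjE exE disjE) (auto dest: depthsA depthsB depthsC)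

lemma part_c_aux: "squeeze_step\<^sup>*\<^sup>* T T' \<Longrightarrow> T' = T \<or> (is_triad T' \<and>
   S_depth T' = S_depth T \<and> NE_depth T' = NE_depth T \<and> NW_depth T' = NW_depth T)"
proof (induction rule: rtranclp_induct)
  case base thus ?case by simp
next
  case (step y z)
  have "is_triad z" using step.hyps(2) by (simp add: squeeze_step_def)
  moreover have "S_depth z = S_depth y \<and> NE_depth z = NE_depth y \<and> NW_depth z = NW_depth y"
    using part_b[OF step.hyps(2)] .
  moreover have "is_triad y" using step.hyps(2) by (simp add: squeeze_step_def)
  ultimately show ?case using step.IH by auto
qed

theorem lemma2p1:
  shows "(\<forall>T. is_triad T \<longrightarrow>
            (tileable (triad_region T) \<longleftrightarrow>
               0 \<le> S_depth T \<and> 0 \<le> NE_depth T \<and> 0 \<le> NW_depth T))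
       \<and> (\<forall>T T'. squeeze_step T T' \<longrightarrow>
            S_depth T' = S_depth T \<and> NE_depth T' = NE_depth T \<and> NW_depth T' = NW_depth T)
       \<and> (\<forall>T T'. is_triad T \<longrightarrow> tileable (triad_region T) \<longrightarrow> squeeze_step\<^sup>*\<^sup>* T T'
            \<longrightarrow> tileable (triad_region T'))"
proof -
  have A: "\<forall>T. is_triad T \<longrightarrow> (tileable (triad_region T) \<longleftrightarrow> 0 \<le> S_depth T \<and> 0 \<le> NE_depth T \<and> 0 \<le> NW_depth T)"
    using part_a by blast
  have B: "\<forall>T T'. squeeze_step T T' \<longrightarrow>
            S_depth T' = S_depth T \<and> NE_depth T' = NE_depth T \<and> NW_depth T' = NW_depth T"
    using part_b by blast
  have C: "\<forall>T T'. is_triad T \<longrightarrow> tileable (triad_region T) \<longrightarrow> squeeze_step\<^sup>*\<^sup>* T T'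
            \<longrightarrow> tileable (triad_region T')"
  proof (intro allI impI)
    fix T T' assume T: "is_triad T" and t: "tileable (triad_region T)" and r: "squeeze_step\<^sup>*\<^sup>* T T'"
    from part_c_aux[OF r] show "tileable (triad_region T')"
    proof
      assume "T' = T" thus ?thesis using t by simp
    next
      assume h: "is_triad T' \<and> S_depth T' = S_depth T \<and> NE_depth T' = NE_depth T \<and> NW_depth T' = NW_depth T"
      have "0 \<le> S_depth T \<and> 0 \<le> NE_depth T \<and> 0 \<le> NW_depth T" using part_a[OF T] t by blast
      thus ?thesis using part_a[of T'] h by simp
    qed
  qed
  from A B C show ?thesis by blast
qed

end
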